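(* Let $0<c<1$ and $\varepsilon,\delta>0$ be fixed, and $d=d(n)=o(n)$. Let $\mathcal{G}^{\varepsilon,\delta}_{d,c}(n)\subseteq\mathcal{G}_{d,c}(n)$ be the set of graphs in which at least $\varepsilon\,(d/2)\,n$ edges are $\delta$-bad. Then, as $n\to\infty$, \[ \log \lvert\mathcal{G}_{d,c}^{\varepsilon,\delta}(n)\rvert \leq \left(1 - c\frac{d-1}{d+1} - \frac{\varepsilon \delta d}{3d+3}\right) \frac{dn}{2} \log \frac{n}{d} + \left(c + \frac{\varepsilon \delta d}{3d+3}\right)\frac{dn}{2} \log d + O(dn).\]
   Context: $T_{\max}=\binom d2\frac n3$; $\mathcal{G}_{d,c}(n)$ is the set of $d$-regular graphs on $n$ labeled nodes with at least $c\cdot T_{\max}$ triangles. For an edge $e$ of a graph, $t_e$ is the number of triangles containing $e$. An edge $e$ of a $d$-regular graph is $\delta$-bad if $1\le t_e\le d-1-\delta d$. *)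

theory Defs
  imports Complex_Main
begin

definition simple_graph :: "nat \<Rightarrow> nat set set \<Rightarrow> bool" where
  "simple_graph n E \<longleftrightarrow> (\<forall>e\<in>E. e \<subseteq> {..<n} \<and> card e = 2)"

definition degree :: "nat set set \<Rightarrow> nat \<Rightarrow> nat" where
  "degree E v = card {e\<in>E. v \<in> e}"

definition regular :: "nat \<Rightarrow> nat \<Rightarrow> nat set set \<Rightarrow> bool" where
  "regular n d E \<longleftrightarrow> (\<forall>v<n. degree E v = d)"

definition triangle_set :: "nat \<Rightarrow> nat set set \<Rightarrow> nat set set" where
  "triangle_set n E = {t. t \<subseteq> {..<n} \<and> card t = 3 \<and> (\<forall>e. e \<subseteq> t \<and> card e = 2 \<longrightarrow> e \<in> E)}"

definition num_triangles :: "nat \<Rightarrow> nat set set \<Rightarrow> nat" where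
  "num_triangles n E = card (triangle_set n E)"

definition edge_triangles :: "nat \<Rightarrow> nat set set \<Rightarrow> nat set \<Rightarrow> nat" where
  "edge_triangles n E e = card {t\<in>triangle_set n E. e \<subseteq> t}"

definition T_max :: "nat \<Rightarrow> nat \<Rightarrow> real" where
  "T_max d n = real (d choose 2) * real n / 3"

definition bad_edge :: "nat \<Rightarrow> nat \<Rightarrow> real \<Rightarrow> nat set set \<Rightarrow> nat set \<Rightarrow> bool" where
  "bad_edge n d \<delta> E e \<longleftrightarrow> e \<in> E \<and> 1 \<le> edge_triangles n E e \<and>
     real (edge_triangles n E e) \<le> real d - 1 - \<delta> * real d"

definition G_dc :: "nat \<Rightarrow> nat \<Rightarrow> real \<Rightarrow> nat set set set" where
  "G_dc n d c = {E. simple_graph n E \<and> regular n d E \<and> real (num_triangles n E) \<ge> c * T_max d n}"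

definition G_bad :: "nat \<Rightarrow> nat \<Rightarrow> real \<Rightarrow> real \<Rightarrow> real \<Rightarrow> nat set set set" where
  "G_bad n d c \<epsilon> \<delta> = {E \<in> G_dc n d c.
     real (card {e. bad_edge n d \<delta> E e}) \<ge> \<epsilon> * (real d / 2) * real n}"

end

theory Submission
  imports Defs "HOL-Combinatorics.Permutations"
begin

definition nbr :: "nat set set \<Rightarrow> nat \<Rightarrow> nat set" where
  "nbr H x = {w. {x,w} \<in> H}"

definition cw :: "nat set set \<Rightarrow> nat \<Rightarrow> nat \<Rightarrow> nat set" where
  "cw H x y = {w. {w,x} \<in> H \<and> {w,y} \<in> H}"

lemma sg_edge: "simple_graph n H \<Longrightarrow> e \<in> H \<Longrightarrow> e \<subseteq> {..<n} \<and> card e = 2"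
  by (auto simp: simple_graph_def)

lemma sg_edge2: "simple_graph n H \<Longrightarrow> {x,y} \<in> H \<Longrightarrow> x \<noteq> y \<and> x < n \<and> y < n"
  using sg_edge[of n H "{x,y}"] by (auto simp: card_2_iff doubleton_eq_iff)

lemma sg_finite: "simple_graph n H \<Longrightarrow> finite H"
proof -
  assume "simple_graph n H"
  then have "H \<subseteq> Pow {..<n}" by (auto simp: simple_graph_def)
  then show ?thesis by (rule finite_subset) simp
qed

lemma sg_edge_obtain:
  assumes "simple_graph n H" "e \<in> H"
  obtains x y where "e = {x,y}" "x < y" "y < n"
proof -
  from sg_edge[OF assms] obtain x y where "e = {x,y}" "x \<noteq> y" "x < n" "y < n"
    by (auto simp: card_2_iff)
  then show ?thesis using that
    by (metis insert_commute linorder_neqE_nat)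
qed

lemma degree_nbr:
  assumes "simple_graph n H"
  shows "degree H x = card (nbr H x)"
proof -
  have "{e\<in>H. x \<in> e} = (\<lambda>w. {x,w}) ` nbr H x"
  proof (auto simp: nbr_def)
    fix e assume "e \<in> H" "x \<in> e"
    then obtain a b where "e = {a,b}" "a \<noteq> b" using sg_edge[OF assms \<open>e \<in> H\<close>] by (auto simp: card_2_iff)
    then show "e \<in> (\<lambda>w. {x, w}) ` {w. {x, w} \<in> H}"
      using \<open>x \<in> e\<close> \<open>e \<in> H\<close> by (auto simp: image_iff insert_commute)
  qed
  moreover have "inj_on (\<lambda>w. {x,w}) (nbr H x)"
    by (auto simp: inj_on_def doubleton_eq_iff)
  ultimately show ?thesis unfolding degree_def by (simp add: card_image)
qed

lemma two_subsets_of_three: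
  assumes "e \<subseteq> {a,b,c}" "card e = 2"
  shows "e = {a,b} \<or> e = {a,c} \<or> e = {b,c}"
proof -
  from assms(2) obtain p q where "e = {p,q}" "p \<noteq> q" by (auto simp: card_2_iff)
  with assms(1) show ?thesis by (auto simp: insert_commute)
qed

lemma edge_triangles_cw:
  assumes sg: "simple_graph n H" and e: "{x,y} \<in> H"
  shows "edge_triangles n H {x,y} = card (cw H x y)"
proof -
  have xy: "x \<noteq> y" "x < n" "y < n" using sg_edge2[OF sg e] by auto
  have "{t\<in>triangle_set n H. {x,y} \<subseteq> t} = (\<lambda>w. {w,x,y}) ` cw H x y"
  proof
    show "{t \<in> triangle_set n H. {x, y} \<subseteq> t} \<subseteq> (\<lambda>w. {w, x, y}) ` cw H x y"
    proof
      fix t assume t: "t \<in> {t \<in> triangle_set n H. {x, y} \<subseteq> t}"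
      then have c3: "card t = 3" and sub: "{x,y} \<subseteq> t"
        and all: "\<And>e. e \<subseteq> t \<Longrightarrow> card e = 2 \<Longrightarrow> e \<in> H"
        by (auto simp: triangle_set_def)
      from c3 obtain a b c where abc: "t = {a,b,c}" "a \<noteq> b" "b \<noteq> c" "a \<noteq> c" by (auto simp: card_3_iff)
      have "\<exists>w. t = {w,x,y}"
        using abc sub xy by auto
      then obtain w where w: "t = {w,x,y}" by blast
      have "w \<noteq> x" "w \<noteq> y" using w c3 xy by (auto simp: card_insert_if split: if_splits)
      then have "{w,x} \<in> H" "{w,y} \<in> H" using all w by auto
      then show "t \<in> (\<lambda>w. {w, x, y}) ` cw H x y" using w by (auto simp: cw_def)
    qed
  next
    show "(\<lambda>w. {w, x, y}) ` cw H x y \<subseteq> {t \<in> triangle_set n H. {x, y} \<subseteq> t}"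
    proof
      fix t assume "t \<in> (\<lambda>w. {w, x, y}) ` cw H x y"
      then obtain w where w: "t = {w,x,y}" "{w,x} \<in> H" "{w,y} \<in> H" by (auto simp: cw_def)
      have wn: "w \<noteq> x" "w \<noteq> y" "w < n" using sg_edge2[OF sg w(2)] sg_edge2[OF sg w(3)] by auto
      have "\<forall>e. e \<subseteq> t \<and> card e = 2 \<longrightarrow> e \<in> H"
      proof (intro allI impI)
        fix e' assume "e' \<subseteq> t \<and> card e' = 2"
        then have "e' = {w,x} \<or> e' = {w,y} \<or> e' = {x,y}"
          using two_subsets_of_three[of e' w x y] w(1) by auto
        then show "e' \<in> H" using w e by auto
      qed
      moreover have "card t = 3" using w wn xy by auto
      ultimately show "t \<in> {t \<in> triangle_set n H. {x, y} \<subseteq> t}"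
        using w wn xy by (auto simp: triangle_set_def)
    qed
  qed
  moreover have "inj_on (\<lambda>w. {w,x,y}) (cw H x y)"
  proof (rule inj_onI)
    fix v w assume "v \<in> cw H x y" "w \<in> cw H x y" "{v,x,y} = {w,x,y}"
    moreover have "v \<noteq> x" "v \<noteq> y" "w \<noteq> x" "w \<noteq> y"
      using calculation sg_edge2[OF sg] by (auto simp: cw_def)
    ultimately show "v = w" by auto
  qed
  ultimately show ?thesis unfolding edge_triangles_def by (simp add: card_image)
qed

lemma cw_bound:
  assumes sg: "simple_graph n H" and rg: "regular n d H" and e: "{x,y} \<in> H"
  shows "card (cw H x y) + 1 \<le> d"
proof -
  have xy: "x \<noteq> y" "x < n" "y < n" using sg_edge2[OF sg e] by auto
  have fin: "finite (nbr H x)"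
  proof -
    have "nbr H x \<subseteq> {..<n}" using sg_edge2[OF sg] by (auto simp: nbr_def)
    then show ?thesis by (rule finite_subset) simp
  qed
  have "cw H x y \<subseteq> nbr H x - {y}" using sg_edge2[OF sg] by (auto simp: cw_def nbr_def insert_commute)
  then have "card (cw H x y) \<le> card (nbr H x - {y})" using fin by (intro card_mono) auto
  moreover have "y \<in> nbr H x" using e by (simp add: nbr_def)
  then have "card (nbr H x - {y}) + 1 = card (nbr H x)" using fin
    by (metis One_nat_def Suc_pred card_Diff_singleton card_gt_0_iff empty_iff Suc_eq_plus1)
  moreover have "card (nbr H x) = d" using rg xy degree_nbr[OF sg] by (simp add: regular_def)
  ultimately show ?thesis by linarith
qed


lemma card_filter_sum: "finite A \<Longrightarrow> card {x\<in>A. P x} = (\<Sum>x\<in>A. if P x then 1 else 0)"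
  by (simp add: sum.If_cases Int_def)

lemma double_count:
  assumes "finite A" "finite B"
  shows "(\<Sum>a\<in>A. card {b\<in>B. R a b}) = (\<Sum>b\<in>B. card {a\<in>A. R a b})"
proof -
  have "(\<Sum>a\<in>A. card {b\<in>B. R a b}) = (\<Sum>a\<in>A. \<Sum>b\<in>B. if R a b then 1 else 0)"
    using assms by (simp add: card_filter_sum)
  also have "\<dots> = (\<Sum>b\<in>B. \<Sum>a\<in>A. if R a b then 1 else 0)" by (rule sum.swap)
  also have "\<dots> = (\<Sum>b\<in>B. card {a\<in>A. R a b})"
    using assms by (simp add: card_filter_sum)
  finally show ?thesis .
qed

lemma handshake:
  assumes sg: "simple_graph n H" and rg: "regular n d H"
  shows "2 * card H = n * d"
proof -
  have fin: "finite H" using sg_finite[OF sg] .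
  have "n * d = (\<Sum>v<n. degree H v)" using rg by (simp add: regular_def)
  also have "\<dots> = (\<Sum>v\<in>{..<n}. card {e\<in>H. v \<in> e})" by (simp add: degree_def)
  also have "\<dots> = (\<Sum>e\<in>H. card {v\<in>{..<n}. v \<in> e})" using fin by (intro double_count) auto
  also have "\<dots> = (\<Sum>e\<in>H. 2)"
  proof (rule sum.cong)
    fix e assume "e \<in> H"
    then have "e \<subseteq> {..<n}" "card e = 2" using sg_edge[OF sg] by auto
    moreover then have "{v\<in>{..<n}. v \<in> e} = e" by auto
    ultimately show "card {v\<in>{..<n}. v \<in> e} = 2" by simp
  qed simp
  finally show ?thesis by simp
qed

lemma triangle_set_finite: "finite (triangle_set n H)"
proof -
  have "triangle_set n H \<subseteq> Pow {..<n}" by (auto simp: triangle_set_def)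
  then show ?thesis by (rule finite_subset) simp
qed

lemma triangle_count:
  assumes sg: "simple_graph n H"
  shows "(\<Sum>e\<in>H. edge_triangles n H e) = 3 * num_triangles n H"
proof -
  have fin: "finite H" using sg_finite[OF sg] .
  have "(\<Sum>e\<in>H. edge_triangles n H e) = (\<Sum>e\<in>H. card {t\<in>triangle_set n H. e \<subseteq> t})"
    by (simp add: edge_triangles_def)
  also have "\<dots> = (\<Sum>t\<in>triangle_set n H. card {e\<in>H. e \<subseteq> t})"
    using fin triangle_set_finite by (intro double_count) auto
  also have "\<dots> = (\<Sum>t\<in>triangle_set n H. 3)"
  proof (rule sum.cong)
    fix t assume t: "t \<in> triangle_set n H"
    then have "{e\<in>H. e \<subseteq> t} = {e. e \<subseteq> t \<and> card e = 2}"
      using sg_edge[OF sg] by (auto simp: triangle_set_def)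
    moreover have "card t = 3" "finite t" using t by (auto simp: triangle_set_def intro: card_ge_0_finite)
    moreover have "(3::nat) choose 2 = 3" by (simp add: choose_two)
    ultimately show "card {e\<in>H. e \<subseteq> t} = 3" by (simp add: n_subsets)
  qed simp
  finally show ?thesis by (simp add: num_triangles_def)
qed

lemma pair_sum:
  assumes sg: "simple_graph n H"
  shows "card {e\<in>H. P e} = (\<Sum>u<n. card {v. u < v \<and> {u,v} \<in> H \<and> P {u,v}})"
proof -
  let ?S = "SIGMA u:{..<n}. {v. u < v \<and> {u,v} \<in> H \<and> P {u,v}}"
  have fins: "\<forall>u\<in>{..<n}. finite {v. u < v \<and> {u,v} \<in> H \<and> P {u,v}}"
  proof
    fix u show "finite {v. u < v \<and> {u,v} \<in> H \<and> P {u,v}}"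
      by (rule finite_subset[of _ "{..<n}"]) (use sg_edge2[OF sg] in auto)
  qed
  have "bij_betw (\<lambda>(u,v). {u,v}) ?S {e\<in>H. P e}"
  proof (rule bij_betwI')
    fix p q assume "p \<in> ?S" "q \<in> ?S"
    then show "((case p of (u, v) \<Rightarrow> {u, v}) = (case q of (u, v) \<Rightarrow> {u, v})) = (p = q)"
      by (cases p, cases q) (auto simp: doubleton_eq_iff)
  next
    fix p assume "p \<in> ?S" then show "(case p of (u, v) \<Rightarrow> {u, v}) \<in> {e \<in> H. P e}" by auto
  next
    fix e assume "e \<in> {e \<in> H. P e}"
    then obtain x y where "e = {x,y}" "x < y" "y < n" "e \<in> H" "P e" using sg_edge_obtain[OF sg] by blast
    then show "\<exists>p\<in>?S. e = (case p of (u, v) \<Rightarrow> {u, v})" by (intro bexI[of _ "(x,y)"]) auto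
  qed
  then have "card {e\<in>H. P e} = card ?S" by (simp add: bij_betw_same_card)
  also have "\<dots> = (\<Sum>u<n. card {v. u < v \<and> {u,v} \<in> H \<and> P {u,v}})"
    using fins by (simp add: card_SigmaI)
  finally show ?thesis .
qed


definition minat :: "(nat \<Rightarrow> nat) \<Rightarrow> nat set \<Rightarrow> nat \<Rightarrow> bool" where
  "minat \<sigma> S x \<longleftrightarrow> (\<forall>y\<in>S. y \<noteq> x \<longrightarrow> \<sigma> x < \<sigma> y)"

abbreviation Perms :: "nat \<Rightarrow> (nat \<Rightarrow> nat) set" where
  "Perms n \<equiv> {\<sigma>. \<sigma> permutes {..<n}}"

lemma Perms_finite: "finite (Perms n)"
  by (rule finite_permutations) simp

lemma Perms_card: "card (Perms n) = fact n"
  by (rule card_permutations) auto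

lemma minat_swap_le:
  assumes S: "S \<subseteq> {..<n}" and xy: "x \<in> S" "y \<in> S"
  shows "card {\<sigma>\<in>Perms n. minat \<sigma> S x} \<le> card {\<sigma>\<in>Perms n. minat \<sigma> S y}"
proof -
  let ?\<tau> = "transpose x y"
  let ?f = "\<lambda>\<sigma>. \<sigma> \<circ> ?\<tau>"
  have inj: "inj_on ?f {\<sigma>\<in>Perms n. minat \<sigma> S x}"
  proof (rule inj_onI)
    fix \<sigma> \<rho> assume "\<sigma> \<circ> ?\<tau> = \<rho> \<circ> ?\<tau>"
    then have "\<sigma> \<circ> ?\<tau> \<circ> ?\<tau> = \<rho> \<circ> ?\<tau> \<circ> ?\<tau>" by simp
    then show "\<sigma> = \<rho>" by (simp add: comp_assoc)
  qed
  have img: "?f ` {\<sigma>\<in>Perms n. minat \<sigma> S x} \<subseteq> {\<sigma>\<in>Perms n. minat \<sigma> S y}"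
  proof
    fix \<rho> assume "\<rho> \<in> ?f ` {\<sigma>\<in>Perms n. minat \<sigma> S x}"
    then obtain \<sigma> where s: "\<sigma> permutes {..<n}" "minat \<sigma> S x" "\<rho> = \<sigma> \<circ> ?\<tau>" by auto
    have "?\<tau> permutes {..<n}" using S xy by (intro permutes_swap_id) auto
    then have "\<rho> permutes {..<n}" using s by (simp add: permutes_compose)
    moreover have "minat \<rho> S y"
      unfolding minat_def
    proof (intro ballI impI)
      fix z assume z: "z \<in> S" "z \<noteq> y"
      show "\<rho> y < \<rho> z"
      proof (cases "z = x")
        case True
        then show ?thesis using s z xy by (simp add: minat_def)
      next
        case False
        then show ?thesis using s z xy by (simp add: minat_def)
      qed
    qed
    ultimately show "\<rho> \<in> {\<sigma>\<in>Perms n. minat \<sigma> S y}" by simp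
  qed
  show ?thesis
    by (rule card_inj_on_le[OF inj img]) (rule finite_subset[OF _ Perms_finite], auto)
qed

lemma minat_exists_unique:
  assumes "\<sigma> permutes {..<n}" "finite S" "S \<noteq> {}"
  shows "\<exists>!x. x \<in> S \<and> minat \<sigma> S x"
proof -
  have inj: "inj \<sigma>" using assms(1) by (rule permutes_inj)
  have "Min (\<sigma> ` S) \<in> \<sigma> ` S" using assms by (intro Min_in) auto
  then obtain x where x: "x \<in> S" "\<sigma> x = Min (\<sigma> ` S)" by auto
  have m: "minat \<sigma> S x"
    unfolding minat_def
  proof (intro ballI impI)
    fix y assume "y \<in> S" "y \<noteq> x"
    then have "\<sigma> x \<le> \<sigma> y" using x assms by auto
    moreover have "\<sigma> y \<noteq> \<sigma> x" using inj \<open>y \<noteq> x\<close> by (auto dest: injD)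
    ultimately show "\<sigma> x < \<sigma> y" by simp
  qed
  show ?thesis
  proof (rule ex1I[of _ x])
    show "x \<in> S \<and> minat \<sigma> S x" using x m by simp
  next
    fix y assume "y \<in> S \<and> minat \<sigma> S y"
    then show "y = x" using m x unfolding minat_def by (metis less_asym)
  qed
qed

lemma minat_card:
  assumes S: "S \<subseteq> {..<n}" and x: "x \<in> S"
  shows "card S * card {\<sigma>\<in>Perms n. minat \<sigma> S x} = fact n"
proof -
  have finS: "finite S" using S by (rule finite_subset) simp
  have eq: "card {\<sigma>\<in>Perms n. minat \<sigma> S y} = card {\<sigma>\<in>Perms n. minat \<sigma> S x}" if "y \<in> S" for y
    using minat_swap_le[OF S x that] minat_swap_le[OF S that x] by simp
  have "Perms n = (\<Union>y\<in>S. {\<sigma>\<in>Perms n. minat \<sigma> S y})"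
    using minat_exists_unique[of _ n S] finS x by blast
  then have "fact n = card (\<Union>y\<in>S. {\<sigma>\<in>Perms n. minat \<sigma> S y})" using Perms_card by metis
  also have "\<dots> = (\<Sum>y\<in>S. card {\<sigma>\<in>Perms n. minat \<sigma> S y})"
  proof (rule card_UN_disjoint[OF finS])
    show "\<forall>i\<in>S. finite {\<sigma> \<in> Perms n. minat \<sigma> S i}" using Perms_finite by auto
    show "\<forall>i\<in>S. \<forall>j\<in>S. i \<noteq> j \<longrightarrow> {\<sigma> \<in> Perms n. minat \<sigma> S i} \<inter> {\<sigma> \<in> Perms n. minat \<sigma> S j} = {}"
      unfolding minat_def by (auto dest: less_asym)
  qed
  also have "\<dots> = card S * card {\<sigma>\<in>Perms n. minat \<sigma> S x}" using eq by simp
  finally show ?thesis by simp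
qed

lemma event_card:
  assumes S: "W \<union> X \<subseteq> {..<n}" and disj: "W \<inter> X = {}" and X: "X \<noteq> {}"
  shows "card (W \<union> X) * card {\<sigma>\<in>Perms n. \<exists>w\<in>W. \<forall>z\<in>X. \<sigma> w < \<sigma> z} = card W * fact n"
proof -
  let ?S = "W \<union> X"
  have finS: "finite ?S" using S by (rule finite_subset) simp
  then have finW: "finite W" by simp
  obtain x0 where x0: "x0 \<in> X" using X by auto
  let ?M = "card {\<sigma>\<in>Perms n. minat \<sigma> ?S x0}"
  have M: "card {\<sigma>\<in>Perms n. minat \<sigma> ?S w} * card ?S = fact n" if "w \<in> ?S" for w
    using minat_card[OF S that] by (simp add: mult.commute)
  have ev: "{\<sigma>\<in>Perms n. \<exists>w\<in>W. \<forall>z\<in>X. \<sigma> w < \<sigma> z} = (\<Union>w\<in>W. {\<sigma>\<in>Perms n. minat \<sigma> ?S w})"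
  proof (intro equalityI subsetI)
    fix \<sigma> assume "\<sigma> \<in> {\<sigma>\<in>Perms n. \<exists>w\<in>W. \<forall>z\<in>X. \<sigma> w < \<sigma> z}"
    then obtain w where w: "\<sigma> permutes {..<n}" "w \<in> W" "\<forall>z\<in>X. \<sigma> w < \<sigma> z" by auto
    obtain w0 where w0: "w0 \<in> ?S" "minat \<sigma> ?S w0" using minat_exists_unique[OF w(1) finS] x0 by blast
    have "w0 \<in> W"
    proof (rule ccontr)
      assume "w0 \<notin> W"
      then have "w0 \<in> X" using w0 by auto
      then have "\<sigma> w < \<sigma> w0" using w by auto
      moreover have "w \<noteq> w0" using \<open>w0 \<notin> W\<close> w by auto
      then have "\<sigma> w0 < \<sigma> w" using w0 w unfolding minat_def by auto
      ultimately show False by simp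
    qed
    then show "\<sigma> \<in> (\<Union>w\<in>W. {\<sigma>\<in>Perms n. minat \<sigma> ?S w})" using w0 w by auto
  next
    fix \<sigma> assume "\<sigma> \<in> (\<Union>w\<in>W. {\<sigma>\<in>Perms n. minat \<sigma> ?S w})"
    then obtain w where w: "w \<in> W" "\<sigma> permutes {..<n}" "minat \<sigma> ?S w" by auto
    have "\<forall>z\<in>X. \<sigma> w < \<sigma> z"
    proof
      fix z assume "z \<in> X"
      then have "z \<noteq> w" "z \<in> ?S" using disj w by auto
      then show "\<sigma> w < \<sigma> z" using w unfolding minat_def by auto
    qed
    then show "\<sigma> \<in> {\<sigma>\<in>Perms n. \<exists>w\<in>W. \<forall>z\<in>X. \<sigma> w < \<sigma> z}"
      using w by auto
  qed
  have "card (\<Union>w\<in>W. {\<sigma>\<in>Perms n. minat \<sigma> ?S w}) = (\<Sum>w\<in>W. card {\<sigma>\<in>Perms n. minat \<sigma> ?S w})"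
  proof (rule card_UN_disjoint[OF finW])
    show "\<forall>i\<in>W. finite {\<sigma> \<in> Perms n. minat \<sigma> ?S i}" using Perms_finite by auto
    show "\<forall>i\<in>W. \<forall>j\<in>W. i \<noteq> j \<longrightarrow> {\<sigma> \<in> Perms n. minat \<sigma> ?S i} \<inter> {\<sigma> \<in> Perms n. minat \<sigma> ?S j} = {}"
      unfolding minat_def by (auto dest: less_asym)
  qed
  then have "card ?S * card {\<sigma>\<in>Perms n. \<exists>w\<in>W. \<forall>z\<in>X. \<sigma> w < \<sigma> z}
      = card ?S * (\<Sum>w\<in>W. card {\<sigma>\<in>Perms n. minat \<sigma> ?S w})"
    by (simp only: ev)
  also have "\<dots> = (\<Sum>w\<in>W. card {\<sigma>\<in>Perms n. minat \<sigma> ?S w} * card ?S)"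
    by (simp add: sum_distrib_left mult.commute)
  also have "\<dots> = (\<Sum>w\<in>W. fact n)" using M by (intro sum.cong) auto
  finally show ?thesis by simp
qed


definition relabel :: "(nat \<Rightarrow> nat) \<Rightarrow> nat set set \<Rightarrow> nat set set" where
  "relabel \<sigma> G = (\<lambda>e. \<sigma> ` e) ` G"

definition cheap :: "nat set set \<Rightarrow> nat" where
  "cheap H = card {e\<in>H. \<exists>w. \<forall>x\<in>e. w < x \<and> {w,x} \<in> H}"

lemma image_filter: "{y \<in> f ` A. P y} = f ` {x\<in>A. P (f x)}"
  by auto

lemma inj_img: "inj f \<Longrightarrow> inj ((`) f)"
  by (rule injI) (simp add: inj_image_eq_iff)

lemma relabel_inj:
  assumes "\<sigma> permutes {..<n}"
  shows "inj (relabel \<sigma>)"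
proof -
  have i: "inj \<sigma>" using assms by (rule permutes_inj)
  show ?thesis unfolding relabel_def using inj_img[OF inj_img[OF i]] .
qed

lemma relabel_mem:
  assumes "\<sigma> permutes {..<n}"
  shows "\<sigma> ` e \<in> relabel \<sigma> G \<longleftrightarrow> e \<in> G"
proof -
  have i: "inj \<sigma>" using assms by (rule permutes_inj)
  then have "inj (image \<sigma>)" by (rule inj_img)
  then show ?thesis unfolding relabel_def by (auto dest: injD)
qed

lemma relabel_simple:
  assumes p: "\<sigma> permutes {..<n}" and sg: "simple_graph n G"
  shows "simple_graph n (relabel \<sigma> G)"
  unfolding simple_graph_def
proof
  fix e' assume "e' \<in> relabel \<sigma> G"
  then obtain e where e: "e \<in> G" "e' = \<sigma> ` e" by (auto simp: relabel_def)
  have "e \<subseteq> {..<n}" "card e = 2" using sg_edge[OF sg e(1)] by auto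
  moreover have "inj_on \<sigma> e" using p by (rule permutes_inj_on)
  ultimately show "e' \<subseteq> {..<n} \<and> card e' = 2"
    using e permutes_in_image[OF p] by (auto simp: card_image)
qed

lemma relabel_regular:
  assumes p: "\<sigma> permutes {..<n}" and sg: "simple_graph n G" and rg: "regular n d G"
  shows "regular n d (relabel \<sigma> G)"
  unfolding regular_def
proof (intro allI impI)
  fix v' assume "v' < n"
  define v where "v = inv \<sigma> v'"
  have v: "v < n" "v' = \<sigma> v"
    using permutes_in_image[OF permutes_inv[OF p], of v'] \<open>v' < n\<close> permutes_inverses(1)[OF p, of v']
    unfolding v_def by auto
  have i: "inj \<sigma>" using p by (rule permutes_inj)
  then have ii: "inj (image \<sigma>)" by (rule inj_img)
  have "{e'\<in>relabel \<sigma> G. v' \<in> e'} = image \<sigma> ` {e\<in>G. \<sigma> v \<in> \<sigma> ` e}"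
    unfolding relabel_def v(2) by auto
  also have "{e\<in>G. \<sigma> v \<in> \<sigma> ` e} = {e\<in>G. v \<in> e}" using i by (simp add: inj_image_mem_iff)
  finally have "{e'\<in>relabel \<sigma> G. v' \<in> e'} = image \<sigma> ` {e\<in>G. v \<in> e}" .
  then have "degree (relabel \<sigma> G) v' = card {e\<in>G. v \<in> e}"
    unfolding degree_def using ii by (simp add: card_image inj_on_subset[OF ii])
  then show "degree (relabel \<sigma> G) v' = d" using rg v by (simp add: regular_def degree_def)
qed

lemma cheap_relabel:
  assumes p: "\<sigma> permutes {..<n}" and sg: "simple_graph n G"
  shows "cheap (relabel \<sigma> G) = card {e\<in>G. \<exists>w. \<forall>x\<in>e. \<sigma> w < \<sigma> x \<and> {w,x} \<in> G}"
proof -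
  have i: "inj \<sigma>" using p by (rule permutes_inj)
  then have ii: "inj (image \<sigma>)" by (rule inj_img)
  have sj: "surj \<sigma>" using p by (rule permutes_surj)
  have key: "(\<exists>w'. \<forall>x'\<in>\<sigma> ` e. w' < x' \<and> {w',x'} \<in> relabel \<sigma> G)
      \<longleftrightarrow> (\<exists>w. \<forall>x\<in>e. \<sigma> w < \<sigma> x \<and> {w,x} \<in> G)" for e
  proof
    assume "\<exists>w'. \<forall>x'\<in>\<sigma> ` e. w' < x' \<and> {w',x'} \<in> relabel \<sigma> G"
    then obtain w' where w': "\<forall>x'\<in>\<sigma> ` e. w' < x' \<and> {w',x'} \<in> relabel \<sigma> G" by blast
    obtain w where ww: "w' = \<sigma> w" using sj by (metis surjD)
    have "\<forall>x\<in>e. \<sigma> w < \<sigma> x \<and> {w,x} \<in> G"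
    proof
      fix x assume "x \<in> e"
      then have "\<sigma> w < \<sigma> x" "\<sigma> ` {w,x} \<in> relabel \<sigma> G" using w' ww by auto
      then show "\<sigma> w < \<sigma> x \<and> {w,x} \<in> G" using relabel_mem[OF p, of "{w,x}" G] by simp
    qed
    then show "\<exists>w. \<forall>x\<in>e. \<sigma> w < \<sigma> x \<and> {w,x} \<in> G" by blast
  next
    assume "\<exists>w. \<forall>x\<in>e. \<sigma> w < \<sigma> x \<and> {w,x} \<in> G"
    then obtain w where w: "\<forall>x\<in>e. \<sigma> w < \<sigma> x \<and> {w,x} \<in> G" by blast
    have "\<forall>x'\<in>\<sigma> ` e. \<sigma> w < x' \<and> {\<sigma> w,x'} \<in> relabel \<sigma> G"
    proof
      fix x' assume "x' \<in> \<sigma> ` e"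
      then obtain x where x: "x \<in> e" "x' = \<sigma> x" by auto
      then have "\<sigma> w < \<sigma> x" "{w,x} \<in> G" using w by auto
      then show "\<sigma> w < x' \<and> {\<sigma> w,x'} \<in> relabel \<sigma> G" using relabel_mem[OF p, of "{w,x}" G] x by simp
    qed
    then show "\<exists>w'. \<forall>x'\<in>\<sigma> ` e. w' < x' \<and> {w',x'} \<in> relabel \<sigma> G" by blast
  qed
  have "{e'\<in>relabel \<sigma> G. \<exists>w. \<forall>x\<in>e'. w < x \<and> {w,x} \<in> relabel \<sigma> G}
      = image \<sigma> ` {e\<in>G. \<exists>w'. \<forall>x'\<in>\<sigma> ` e. w' < x' \<and> {w',x'} \<in> relabel \<sigma> G}"
    unfolding relabel_def[of \<sigma> G, symmetric] by (simp only: image_filter relabel_def)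
  also have "{e\<in>G. \<exists>w'. \<forall>x'\<in>\<sigma> ` e. w' < x' \<and> {w',x'} \<in> relabel \<sigma> G}
     = {e\<in>G. \<exists>w. \<forall>x\<in>e. \<sigma> w < \<sigma> x \<and> {w,x} \<in> G}"
    using key by blast
  finally have "{e'\<in>relabel \<sigma> G. \<exists>w. \<forall>x\<in>e'. w < x \<and> {w,x} \<in> relabel \<sigma> G}
      = image \<sigma> ` {e\<in>G. \<exists>w. \<forall>x\<in>e. \<sigma> w < \<sigma> x \<and> {w,x} \<in> G}" .
  then show ?thesis unfolding cheap_def using ii by (simp add: card_image inj_on_subset[OF ii])
qed

lemma cheap_le: "simple_graph n H \<Longrightarrow> cheap H \<le> card H"
  unfolding cheap_def by (intro card_mono) (auto dest: sg_finite)

lemma relabel_card: "\<sigma> permutes {..<n} \<Longrightarrow> card (relabel \<sigma> G) = card G"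
proof -
  assume p: "\<sigma> permutes {..<n}"
  have "inj (image \<sigma>)" using permutes_inj[OF p] by (rule inj_img)
  then show ?thesis unfolding relabel_def by (simp add: card_image inj_on_subset)
qed

lemma edge_event:
  assumes sg: "simple_graph n G" and e: "{x,y} \<in> G"
  shows "real (card {\<sigma>\<in>Perms n. \<exists>w. \<forall>z\<in>{x,y}. \<sigma> w < \<sigma> z \<and> {w,z} \<in> G})
     = real (card (cw G x y)) * fact n / (real (card (cw G x y)) + 2)"
proof -
  let ?W = "cw G x y"
  let ?E = "{\<sigma>\<in>Perms n. \<exists>w\<in>?W. \<forall>z\<in>{x,y}. \<sigma> w < \<sigma> z}"
  have xy: "x \<noteq> y" "x < n" "y < n" using sg_edge2[OF sg e] by auto
  have sub: "?W \<union> {x,y} \<subseteq> {..<n}" using xy sg_edge2[OF sg] by (auto simp: cw_def)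
  have nl: "\<forall>w. {w} \<notin> G" using sg_edge[OF sg] by fastforce
  have disj: "?W \<inter> {x,y} = {}" using nl by (auto simp: cw_def)
  have finW: "finite ?W" by (rule finite_subset[of _ "{..<n}"]) (use sub in auto)
  have cS: "card (?W \<union> {x,y}) = card ?W + 2" using disj finW xy by (simp add: card_Un_disjoint)
  have set: "{\<sigma>\<in>Perms n. \<exists>w. \<forall>z\<in>{x,y}. \<sigma> w < \<sigma> z \<and> {w,z} \<in> G} = ?E"
    unfolding cw_def by blast
  have "card (?W \<union> {x,y}) * card ?E = card ?W * fact n"
    by (rule event_card[OF sub disj]) simp
  then have c: "(card ?W + 2) * card ?E = card ?W * fact n" by (simp only: cS)
  have "real ((card ?W + 2) * card ?E) = real (card ?W * fact n)" using c by (rule arg_cong)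
  then have "(real (card ?W) + 2) * real (card ?E) = real (card ?W) * fact n"
    by (simp only: of_nat_mult of_nat_add of_nat_fact) simp
  then have "real (card ?E) = real (card ?W) * fact n / (real (card ?W) + 2)"
    by (simp add: eq_divide_eq mult.commute)
  then show ?thesis unfolding set .
qed

lemma cheap_average:
  assumes sg: "simple_graph n G"
  shows "(\<Sum>\<sigma>\<in>Perms n. real (cheap (relabel \<sigma> G)))
     = (\<Sum>e\<in>G. real (edge_triangles n G e) * fact n / (real (edge_triangles n G e) + 2))"
proof -
  have finG: "finite G" using sg by (rule sg_finite)
  have "(\<Sum>\<sigma>\<in>Perms n. cheap (relabel \<sigma> G))
      = (\<Sum>\<sigma>\<in>Perms n. card {e\<in>G. \<exists>w. \<forall>x\<in>e. \<sigma> w < \<sigma> x \<and> {w,x} \<in> G})"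
  proof (rule sum.cong[OF refl])
    fix \<sigma> assume "\<sigma> \<in> Perms n"
    then show "cheap (relabel \<sigma> G) = card {e\<in>G. \<exists>w. \<forall>x\<in>e. \<sigma> w < \<sigma> x \<and> {w,x} \<in> G}"
      using cheap_relabel[OF _ sg] by blast
  qed
  also have "\<dots> = (\<Sum>e\<in>G. card {\<sigma>\<in>Perms n. \<exists>w. \<forall>x\<in>e. \<sigma> w < \<sigma> x \<and> {w,x} \<in> G})"
    by (rule double_count[OF Perms_finite finG])
  finally have eq: "real (\<Sum>\<sigma>\<in>Perms n. cheap (relabel \<sigma> G))
      = real (\<Sum>e\<in>G. card {\<sigma>\<in>Perms n. \<exists>w. \<forall>x\<in>e. \<sigma> w < \<sigma> x \<and> {w,x} \<in> G})"
    by (rule arg_cong)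
  have "(\<Sum>\<sigma>\<in>Perms n. real (cheap (relabel \<sigma> G)))
      = (\<Sum>e\<in>G. real (card {\<sigma>\<in>Perms n. \<exists>w. \<forall>x\<in>e. \<sigma> w < \<sigma> x \<and> {w,x} \<in> G}))"
    using eq by (simp only: of_nat_sum)
  also have "\<dots> = (\<Sum>e\<in>G. real (edge_triangles n G e) * fact n / (real (edge_triangles n G e) + 2))"
  proof (rule sum.cong[OF refl])
    fix e assume e: "e \<in> G"
    then obtain x y where xy: "e = {x,y}" "x < y" "y < n" using sg_edge_obtain[OF sg] by blast
    have e': "{x,y} \<in> G" using e xy by simp
    show "real (card {\<sigma>\<in>Perms n. \<exists>w. \<forall>x\<in>e. \<sigma> w < \<sigma> x \<and> {w,x} \<in> G})
       = real (edge_triangles n G e) * fact n / (real (edge_triangles n G e) + 2)"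
      unfolding xy(1) by (simp only: edge_event[OF sg e'] edge_triangles_cw[OF sg e'])
  qed
  finally show ?thesis .
qed


lemma count_seq:
  fixes Opt :: "nat \<Rightarrow> (nat \<Rightarrow> nat set) \<Rightarrow> nat set set"
  assumes cong: "\<And>u f g. (\<forall>w<u. f w = g w) \<Longrightarrow> Opt u f = Opt u g"
    and fin: "\<And>u f. finite (Opt u f)"
    and bnd: "\<And>u f. card (Opt u f) \<le> M u"
  shows "finite {f. (\<forall>u<k. f u \<in> Opt u f) \<and> (\<forall>u\<ge>k. f u = {})}
    \<and> card {f. (\<forall>u<k. f u \<in> Opt u f) \<and> (\<forall>u\<ge>k. f u = {})} \<le> (\<Prod>u<k. M u)"
proof (induction k)
  case 0
  have "{f. (\<forall>u<0. f u \<in> Opt u f) \<and> (\<forall>u\<ge>0. f u = ({}::nat set))} = {\<lambda>_. {}}" by auto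
  then show ?case by simp
next
  case (Suc k)
  let ?S = "\<lambda>k. {f. (\<forall>u<k. f u \<in> Opt u f) \<and> (\<forall>u\<ge>k. f u = {})}"
  have finS: "finite (?S k)" and cS: "card (?S k) \<le> (\<Prod>u<k. M u)" using Suc.IH by auto
  have sub: "?S (Suc k) \<subseteq> (\<lambda>(f,X). f(k:=X)) ` (SIGMA f:?S k. Opt k f)"
  proof
    fix g assume g: "g \<in> ?S (Suc k)"
    let ?f = "g(k:={})"
    have agree: "\<forall>w<u. ?f w = g w" if "u \<le> k" for u using that by auto
    have "?f \<in> ?S k"
    proof -
      have "\<forall>u<k. ?f u \<in> Opt u ?f"
      proof (intro allI impI)
        fix u assume "u < k"
        then have "g u \<in> Opt u g" using g by auto
        moreover have "Opt u ?f = Opt u g" using agree[of u] \<open>u < k\<close> by (intro cong) auto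
        ultimately show "?f u \<in> Opt u ?f" using \<open>u < k\<close> by simp
      qed
      moreover have "\<forall>u\<ge>k. ?f u = {}" using g by auto
      ultimately show ?thesis by simp
    qed
    moreover have "g k \<in> Opt k ?f"
    proof -
      have "g k \<in> Opt k g" using g by auto
      moreover have "Opt k ?f = Opt k g" using agree[of k] by (intro cong) auto
      ultimately show ?thesis by simp
    qed
    moreover have "g = (\<lambda>(f,X). f(k:=X)) (?f, g k)" by simp
    ultimately show "g \<in> (\<lambda>(f,X). f(k:=X)) ` (SIGMA f:?S k. Opt k f)"
      by (intro image_eqI[of _ _ "(?f, g k)"] SigmaI)
  qed
  have finSig: "finite (SIGMA f:?S k. Opt k f)" using finS fin by auto
  have "card (SIGMA f:?S k. Opt k f) = (\<Sum>f\<in>?S k. card (Opt k f))"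
    using finS fin by (simp add: card_SigmaI)
  also have "\<dots> \<le> (\<Sum>f\<in>?S k. M k)" by (intro sum_mono bnd)
  also have "\<dots> = card (?S k) * M k" by simp
  also have "\<dots> \<le> (\<Prod>u<k. M u) * M k" using cS by simp
  also have "\<dots> = (\<Prod>u<Suc k. M u)" by simp
  finally have c: "card (SIGMA f:?S k. Opt k f) \<le> (\<Prod>u<Suc k. M u)" .
  have "finite (?S (Suc k))" using finite_subset[OF sub finite_imageI[OF finSig]] .
  moreover have "card (?S (Suc k)) \<le> (\<Prod>u<Suc k. M u)"
    using card_mono[OF finite_imageI[OF finSig] sub] card_image_le[OF finSig, of "\<lambda>(f,X). f(k:=X)"] c
    by linarith
  ultimately show ?case by blast
qed

definition Fw :: "nat set set \<Rightarrow> nat \<Rightarrow> nat set" where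
  "Fw H u = {v. u < v \<and> {u,v} \<in> H}"

definition Nf :: "(nat \<Rightarrow> nat set) \<Rightarrow> nat \<Rightarrow> nat set" where
  "Nf f w = f w \<union> {x. x < w \<and> w \<in> f x}"

definition Uf :: "(nat \<Rightarrow> nat set) \<Rightarrow> nat \<Rightarrow> nat set" where
  "Uf f u = (\<Union>w\<in>{w. w < u \<and> u \<in> f w}. Nf f w)"

lemma Uf_cong:
  assumes "\<forall>w<u. f w = g w"
  shows "Uf f u = Uf g u"
proof -
  have "Nf f w = Nf g w" if "w < u" for w
    using assms that unfolding Nf_def by auto
  moreover have "{w. w < u \<and> u \<in> f w} = {w. w < u \<and> u \<in> g w}" using assms by auto
  ultimately show ?thesis unfolding Uf_def by auto
qed

definition admits :: "nat \<Rightarrow> nat set set \<Rightarrow> (nat \<Rightarrow> nat \<times> nat) \<Rightarrow> bool" where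
  "admits n H p \<longleftrightarrow> (\<forall>u<n. \<exists>A B. Fw H u = A \<union> B \<and> A \<inter> B = {} \<and> A \<subseteq> Uf (Fw H) u
      \<and> card A = fst (p u) \<and> B \<subseteq> {..<n} \<and> card B = snd (p u))"

definition OptP :: "nat \<Rightarrow> nat \<Rightarrow> (nat \<Rightarrow> nat \<times> nat) \<Rightarrow> nat \<Rightarrow> (nat \<Rightarrow> nat set) \<Rightarrow> nat set set" where
  "OptP n d p u f = (if finite (Uf f u) \<and> card (Uf f u) \<le> d * (d - fst (p u) - snd (p u))
     then (\<lambda>(A,B). A \<union> B) ` ({A. A \<subseteq> Uf f u \<and> card A = fst (p u)} \<times> {B. B \<subseteq> {..<n} \<and> card B = snd (p u)})
     else {})"

definition Mp :: "nat \<Rightarrow> nat \<Rightarrow> (nat \<Rightarrow> nat \<times> nat) \<Rightarrow> nat \<Rightarrow> nat" where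
  "Mp n d p u = ((d * (d - fst (p u) - snd (p u))) choose fst (p u)) * (n choose snd (p u))"

lemma OptP_props:
  "finite (OptP n d p u f)" "card (OptP n d p u f) \<le> Mp n d p u"
proof -
  let ?U = "Uf f u" and ?a = "fst (p u)" and ?b = "snd (p u)"
  show "finite (OptP n d p u f)"
  proof (cases "finite ?U")
    case True
    have "finite {A. A \<subseteq> ?U \<and> card A = ?a}" by (rule finite_subset[of _ "Pow ?U"]) (use True in auto)
    moreover have "finite {B. B \<subseteq> {..<n} \<and> card B = ?b}" by (rule finite_subset[of _ "Pow {..<n}"]) auto
    ultimately show ?thesis unfolding OptP_def by auto
  qed (simp add: OptP_def)
  show "card (OptP n d p u f) \<le> Mp n d p u"
  proof (cases "finite ?U \<and> card ?U \<le> d * (d - ?a - ?b)")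
    case True
    then have fU: "finite ?U" by simp
    have f1: "finite {A. A \<subseteq> ?U \<and> card A = ?a}" by (rule finite_subset[of _ "Pow ?U"]) (use fU in auto)
    have f2: "finite {B. B \<subseteq> {..<n} \<and> card B = ?b}" by (rule finite_subset[of _ "Pow {..<n}"]) auto
    have "card (OptP n d p u f) = card ((\<lambda>(A,B). A \<union> B) ` ({A. A \<subseteq> ?U \<and> card A = ?a} \<times> {B. B \<subseteq> {..<n} \<and> card B = ?b}))"
      unfolding OptP_def using True by simp
    also have "\<dots> \<le> card ({A. A \<subseteq> ?U \<and> card A = ?a} \<times> {B. B \<subseteq> {..<n} \<and> card B = ?b})"
      using f1 f2 by (intro card_image_le) simp
    finally have "card (OptP n d p u f) \<le> card ({A. A \<subseteq> ?U \<and> card A = ?a} \<times> {B. B \<subseteq> {..<n} \<and> card B = ?b})" .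
    also have "\<dots> = (card ?U choose ?a) * (n choose ?b)"
      using fU by (simp add: card_cartesian_product n_subsets)
    also have "\<dots> \<le> ((d * (d - ?a - ?b)) choose ?a) * (n choose ?b)"
      using True by (intro mult_right_mono binomial_right_mono) auto
    finally show ?thesis unfolding Mp_def .
  qed (auto simp: OptP_def)
qed

lemma Fw_inj:
  assumes "simple_graph n H1" "simple_graph n H2" "Fw H1 = Fw H2"
  shows "H1 = H2"
proof -
  have rep: "H = {e. \<exists>u v. e = {u,v} \<and> v \<in> Fw H u}" if H: "simple_graph n H" for H
  proof
    show "H \<subseteq> {e. \<exists>u v. e = {u,v} \<and> v \<in> Fw H u}"
    proof
      fix e assume "e \<in> H"
      then obtain x y where "e = {x,y}" "x < y" using sg_edge_obtain[OF H] by blast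
      then show "e \<in> {e. \<exists>u v. e = {u,v} \<and> v \<in> Fw H u}" using \<open>e \<in> H\<close> by (auto simp: Fw_def)
    qed
  next
    show "{e. \<exists>u v. e = {u,v} \<and> v \<in> Fw H u} \<subseteq> H" unfolding Fw_def by blast
  qed
  have "H1 = {e. \<exists>u v. e = {u,v} \<and> v \<in> Fw H1 u}" using rep[OF assms(1)] .
  also have "\<dots> = {e. \<exists>u v. e = {u,v} \<and> v \<in> Fw H2 u}" unfolding assms(3) ..
  also have "\<dots> = H2" using rep[OF assms(2)] by simp
  finally show ?thesis .
qed

lemma Fw_empty:
  assumes sg: "simple_graph n H" and u: "u \<ge> n" shows "Fw H u = {}"
proof -
  have "v \<notin> Fw H u" for v
  proof
    assume "v \<in> Fw H u"
    then have "{u,v} \<in> H" by (simp add: Fw_def)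
    then have "u < n" using sg_edge2[OF sg] by blast
    then show False using u by simp
  qed
  then show ?thesis by blast
qed

lemma Nf_Fw:
  assumes sg: "simple_graph n H"
  shows "Nf (Fw H) w = nbr H w"
proof -
  show ?thesis
  proof (rule set_eqI)
    fix x
    have c: "{x,w} = {w,x}" by auto
    have ne: "x \<noteq> w" if "{w,x} \<in> H" using sg_edge2[OF sg that] by simp
    have 1: "x \<in> Nf (Fw H) w \<longleftrightarrow> (w < x \<and> {w,x} \<in> H) \<or> (x < w \<and> {w,x} \<in> H)"
      unfolding Nf_def Fw_def using c by auto
    show "x \<in> Nf (Fw H) w \<longleftrightarrow> x \<in> nbr H w"
      unfolding 1 nbr_def using ne by (auto dest: linorder_neqE_nat)
  qed
qed

lemma nbr_card:
  assumes sg: "simple_graph n H" and rg: "regular n d H" and "w < n"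
  shows "card (nbr H w) = d" "finite (nbr H w)"
proof -
  show "card (nbr H w) = d" using degree_nbr[OF sg] rg assms(3) by (simp add: regular_def)
  show "finite (nbr H w)" by (rule finite_subset[of _ "{..<n}"]) (use sg_edge2[OF sg] in \<open>auto simp: nbr_def\<close>)
qed

lemma Fw_sub_nbr: "Fw H u \<subseteq> nbr H u" by (auto simp: Fw_def nbr_def)

lemma Uf_guard:
  assumes sg: "simple_graph n H" and rg: "regular n d H" and u: "u < n"
    and A: "Fw H u = A \<union> B" "A \<inter> B = {}"
  shows "finite (Uf (Fw H) u) \<and> card (Uf (Fw H) u) \<le> d * (d - card A - card B)"
proof -
  let ?Bk = "{w. w < u \<and> u \<in> Fw H w}"
  have finN: "finite (nbr H u)" and cN: "card (nbr H u) = d" using nbr_card[OF sg rg u] by auto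
  have finBk: "finite ?Bk" by (rule finite_subset[of _ "{..<u}"]) auto
  have "nbr H u = ?Bk \<union> Fw H u" using sg_edge2[OF sg] Nf_Fw[OF sg, of u]
    unfolding Nf_def by auto
  moreover have "?Bk \<inter> Fw H u = {}" by (auto simp: Fw_def)
  ultimately have "card ?Bk + card (Fw H u) = d" using finN cN
    by (metis card_Un_disjoint finite_Un)
  moreover have "card (Fw H u) = card A + card B"
    using A finite_subset[OF Fw_sub_nbr finN] by (metis card_Un_disjoint finite_Un)
  ultimately have cB: "card ?Bk = d - card A - card B" by simp
  have fin: "\<forall>w\<in>?Bk. finite (Nf (Fw H) w)"
  proof
    fix w assume "w \<in> ?Bk" then have "w < n" using u by auto
    then show "finite (Nf (Fw H) w)" using nbr_card[OF sg rg] Nf_Fw[OF sg] by simp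
  qed
  have "finite (Uf (Fw H) u)" unfolding Uf_def using finBk fin by auto
  moreover have "card (Uf (Fw H) u) \<le> (\<Sum>w\<in>?Bk. card (Nf (Fw H) w))"
    unfolding Uf_def using finBk by (rule card_UN_le)
  moreover have "(\<Sum>w\<in>?Bk. card (Nf (Fw H) w)) = (\<Sum>w\<in>?Bk. d)"
  proof (rule sum.cong[OF refl])
    fix w assume "w \<in> ?Bk" then have "w < n" using u by auto
    then show "card (Nf (Fw H) w) = d" using nbr_card[OF sg rg] Nf_Fw[OF sg] by simp
  qed
  ultimately show ?thesis using cB by (simp add: mult.commute)
qed

lemma count_profile:
  "card {H. simple_graph n H \<and> regular n d H \<and> admits n H p} \<le> (\<Prod>u<n. Mp n d p u)"
proof -
  let ?T = "{H. simple_graph n H \<and> regular n d H \<and> admits n H p}"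
  let ?S = "{f. (\<forall>u<n. f u \<in> OptP n d p u f) \<and> (\<forall>u\<ge>n. f u = {})}"
  have cong: "OptP n d p u f = OptP n d p u g" if "\<forall>w<u. f w = g w" for u f g
  proof -
    have "Uf f u = Uf g u" using that by (rule Uf_cong)
    then show ?thesis unfolding OptP_def by simp
  qed
  have S: "finite ?S \<and> card ?S \<le> (\<Prod>u<n. Mp n d p u)"
  proof (rule count_seq[of "OptP n d p" "Mp n d p" n])
    show "\<And>u f g. \<forall>w<u. f w = g w \<Longrightarrow> OptP n d p u f = OptP n d p u g" by (rule cong)
    show "\<And>u f. finite (OptP n d p u f)" by (rule OptP_props(1))
    show "\<And>u f. card (OptP n d p u f) \<le> Mp n d p u" by (rule OptP_props(2))
  qed
  have inj: "inj_on Fw ?T"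
  proof (rule inj_onI)
    fix H1 H2 assume "H1 \<in> ?T" "H2 \<in> ?T" "Fw H1 = Fw H2"
    then show "H1 = H2" using Fw_inj[of n H1 H2] by simp
  qed
  have img: "Fw ` ?T \<subseteq> ?S"
  proof
    fix f assume "f \<in> Fw ` ?T"
    then obtain H where H0: "H \<in> ?T" "f = Fw H" by (rule imageE)
    then have H: "simple_graph n H" "regular n d H" "admits n H p" "f = Fw H" by simp_all
    have "\<forall>u<n. f u \<in> OptP n d p u f"
    proof (intro allI impI)
      fix u assume u: "u < n"
      have "\<exists>A B. Fw H u = A \<union> B \<and> A \<inter> B = {} \<and> A \<subseteq> Uf (Fw H) u
      \<and> card A = fst (p u) \<and> B \<subseteq> {..<n} \<and> card B = snd (p u)"
        using H(3) u unfolding admits_def by (elim allE impE) 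
      then obtain A B where AB: "Fw H u = A \<union> B" "A \<inter> B = {}" "A \<subseteq> Uf (Fw H) u"
        "card A = fst (p u)" "B \<subseteq> {..<n}" "card B = snd (p u)"
        by blast
      have g: "finite (Uf (Fw H) u) \<and> card (Uf (Fw H) u) \<le> d * (d - card A - card B)"
        using Uf_guard[OF H(1,2) u AB(1,2)] .
      have g': "finite (Uf (Fw H) u) \<and> card (Uf (Fw H) u) \<le> d * (d - fst (p u) - snd (p u))"
        using g AB(4,6) by simp
      have "Fw H u \<in> (\<lambda>(A,B). A \<union> B) ` ({A. A \<subseteq> Uf (Fw H) u \<and> card A = fst (p u)} \<times> {B. B \<subseteq> {..<n} \<and> card B = snd (p u)})"
        by (rule image_eqI[of _ _ "(A,B)"]) (use AB in auto)
      then show "f u \<in> OptP n d p u f"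
        unfolding OptP_def H(4) if_P[OF g'] .
    qed
    moreover have "\<forall>u\<ge>n. f u = {}" unfolding H(4) using Fw_empty[OF H(1)] by blast
    ultimately show "f \<in> ?S" by simp
  qed
  have "card ?T = card (Fw ` ?T)" using inj by (simp add: card_image)
  also have "\<dots> \<le> card ?S" using img S by (intro card_mono) auto
  finally show ?thesis using S by linarith
qed


lemma pow_fact_le_exp:
  fixes x :: real
  assumes "x \<ge> 0"
  shows "x ^ a / fact a \<le> exp x"
proof -
  have s: "(\<lambda>n. x ^ n / fact n) sums exp x"
    using exp_converges[of x] by (simp add: divide_inverse mult.commute)
  have "(\<Sum>n\<in>{a}. x ^ n / fact n) \<le> (\<Sum>n. x ^ n / fact n)"
    by (rule sum_le_suminf[OF sums_summable[OF s]]) (use assms in auto)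
  then show ?thesis using sums_unique[OF s] by simp
qed

lemma choose_real_le: "real (N choose a) \<le> real N ^ a / fact a"
proof -
  have "real ((N choose a) * fact a) \<le> real (N ^ a)"
    using binomial_fact_pow[of N a] by (simp only: of_nat_le_iff)
  then have "real (N choose a) * fact a \<le> real N ^ a" by simp
  then show ?thesis by (simp add: field_simps)
qed

lemma Mp_le:
  assumes d: "d \<ge> 1" and n: "n \<ge> 1"
  shows "real (Mp n d p u) \<le> real d ^ fst (p u) * (real n / real d) ^ snd (p u) * exp (2 * real d)"
proof -
  let ?a = "fst (p u)" and ?b = "snd (p u)"
  let ?k = "d - ?a - ?b"
  have dpos: "real d > 0" using d by simp
  have "real ((d * ?k) choose ?a) \<le> real (d * ?k) ^ ?a / fact ?a" by (rule choose_real_le)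
  also have "\<dots> = real d ^ ?a * (real ?k ^ ?a / fact ?a)" by (simp add: power_mult_distrib)
  also have "\<dots> \<le> real d ^ ?a * exp (real ?k)"
    by (intro mult_left_mono pow_fact_le_exp) auto
  also have "\<dots> \<le> real d ^ ?a * exp (real d)" by (intro mult_left_mono) auto
  finally have 1: "real ((d * ?k) choose ?a) \<le> real d ^ ?a * exp (real d)" .
  have "real (n choose ?b) \<le> real n ^ ?b / fact ?b" by (rule choose_real_le)
  also have "\<dots> = (real n / real d) ^ ?b * (real d ^ ?b / fact ?b)"
    using dpos by (simp add: power_divide field_simps)
  also have "\<dots> \<le> (real n / real d) ^ ?b * exp (real d)"
    by (intro mult_left_mono pow_fact_le_exp) auto
  finally have 2: "real (n choose ?b) \<le> (real n / real d) ^ ?b * exp (real d)" .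
  have "real (Mp n d p u) = real ((d * ?k) choose ?a) * real (n choose ?b)" by (simp add: Mp_def)
  also have "\<dots> \<le> (real d ^ ?a * exp (real d)) * ((real n / real d) ^ ?b * exp (real d))"
    using 1 2 by (intro mult_mono) auto
  also have "\<dots> = real d ^ ?a * (real n / real d) ^ ?b * (exp (real d) * exp (real d))"
    by (simp only: mult_ac)
  also have "exp (real d) * exp (real d) = exp (2 * real d)"
    by (simp only: exp_add[symmetric] mult_2)
  finally show ?thesis .
qed

lemma prod_Mp_le:
  assumes d: "d \<ge> 1" and n: "n \<ge> 1"
  shows "real (\<Prod>u<n. Mp n d p u) \<le>
    exp ((\<Sum>u<n. real (fst (p u))) * ln (real d) + (\<Sum>u<n. real (snd (p u))) * ln (real n / real d)
         + 2 * real d * real n)"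
proof -
  have dpos: "real d > 0" and npos: "real n / real d > 0" using d n by auto
  have "real (\<Prod>u<n. Mp n d p u) = (\<Prod>u<n. real (Mp n d p u))" by simp
  also have "\<dots> \<le> (\<Prod>u<n. real d ^ fst (p u) * (real n / real d) ^ snd (p u) * exp (2 * real d))"
    by (intro prod_mono) (use Mp_le[OF d n] in auto)
  also have "\<dots> = (\<Prod>u<n. exp (real (fst (p u)) * ln (real d) + real (snd (p u)) * ln (real n / real d) + 2 * real d))"
  proof (rule prod.cong[OF refl])
    fix u
    have "real d ^ fst (p u) = exp (real (fst (p u)) * ln (real d))"
      using dpos by (simp add: exp_of_nat_mult)
    moreover have "(real n / real d) ^ snd (p u) = exp (real (snd (p u)) * ln (real n / real d))"
      using npos by (simp add: exp_of_nat_mult del: exp_ln_iff)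
    ultimately show "real d ^ fst (p u) * (real n / real d) ^ snd (p u) * exp (2 * real d)
      = exp (real (fst (p u)) * ln (real d) + real (snd (p u)) * ln (real n / real d) + 2 * real d)"
      by (simp add: exp_add)
  qed
  also have "\<dots> = exp (\<Sum>u<n. real (fst (p u)) * ln (real d) + real (snd (p u)) * ln (real n / real d) + 2 * real d)"
    by (simp add: exp_sum)
  also have "(\<Sum>u<n. real (fst (p u)) * ln (real d) + real (snd (p u)) * ln (real n / real d) + 2 * real d)
     = (\<Sum>u<n. real (fst (p u))) * ln (real d) + (\<Sum>u<n. real (snd (p u))) * ln (real n / real d)
         + 2 * real d * real n"
    by (simp add: sum.distrib sum_distrib_right)
  finally show ?thesis .
qed


lemma admits_bound:
  assumes sg: "simple_graph n H" and rg: "regular n d H" and ad: "admits n H p" and u: "u < n"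
  shows "fst (p u) \<le> d \<and> snd (p u) \<le> d"
proof -
  have "\<exists>A B. Fw H u = A \<union> B \<and> A \<inter> B = {} \<and> A \<subseteq> Uf (Fw H) u
      \<and> card A = fst (p u) \<and> B \<subseteq> {..<n} \<and> card B = snd (p u)"
    using ad u unfolding admits_def by (elim allE impE)
  then obtain A B where AB: "Fw H u = A \<union> B" "card A = fst (p u)" "card B = snd (p u)"
    by blast
  have fin: "finite (nbr H u)" and c: "card (nbr H u) = d" using nbr_card[OF sg rg u] by auto
  have fF: "finite (Fw H u)" using finite_subset[OF Fw_sub_nbr fin] .
  have cF: "card (Fw H u) \<le> d" using card_mono[OF fin Fw_sub_nbr[of H u]] c by simp
  have "card A \<le> card (Fw H u)" using AB(1) fF by (intro card_mono) auto
  moreover have "card B \<le> card (Fw H u)" using AB(1) fF by (intro card_mono) auto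
  ultimately have "card A \<le> d" "card B \<le> d" using cF by auto
  then show ?thesis using AB by simp
qed

lemma count_main:
  assumes d: "d \<ge> 1" and n: "n \<ge> 1"
    and S: "\<forall>H\<in>S. simple_graph n H \<and> regular n d H \<and> (\<exists>p. admits n H p \<and>
        (\<Sum>u<n. real (fst (p u))) * ln (real d) + (\<Sum>u<n. real (snd (p u))) * ln (real n / real d) \<le> R)"
  shows "real (card S) \<le> real ((d+1)^2) ^ n * exp (R + 2 * real d * real n)"
proof -
  define Prof where "Prof = PiE {..<n} (\<lambda>_. {0..d} \<times> {0..d})"
  define good where "good p \<longleftrightarrow> (\<Sum>u<n. real (fst (p u))) * ln (real d) + (\<Sum>u<n. real (snd (p u))) * ln (real n / real d) \<le> R" for p :: "nat \<Rightarrow> nat \<times> nat"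
  define T where "T p = {H. simple_graph n H \<and> regular n d H \<and> admits n H p}" for p
  let ?P = "{p\<in>Prof. good p}"
  have finProf: "finite Prof" unfolding Prof_def by (intro finite_PiE) auto
  then have finP: "finite ?P" by simp
  have cardProf: "card Prof = ((d+1)^2) ^ n"
    unfolding Prof_def by (simp add: card_PiE power2_eq_square)
  have sub: "S \<subseteq> (\<Union>p\<in>?P. T p)"
  proof
    fix H assume H: "H \<in> S"
    then have sg: "simple_graph n H" and rg: "regular n d H" using S by auto
    from H S obtain p where ad: "admits n H p" and gp: "good p" unfolding good_def by blast
    define p' where "p' = restrict p {..<n}"
    have eqp: "p' u = p u" if "u < n" for u using that by (simp add: p'_def)
    have ad': "admits n H p'" using ad eqp unfolding admits_def by simp
    have "(\<Sum>u<n. real (fst (p' u))) = (\<Sum>u<n. real (fst (p u)))" "(\<Sum>u<n. real (snd (p' u))) = (\<Sum>u<n. real (snd (p u)))"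
      using eqp by (auto intro!: sum.cong)
    then have gp': "good p'" using gp unfolding good_def by simp
    have "p' \<in> Prof" unfolding Prof_def PiE_iff
    proof
      show "\<forall>i\<in>{..<n}. p' i \<in> {0..d} \<times> {0..d}"
        using admits_bound[OF sg rg ad] eqp by (auto simp: mem_Times_iff)
      show "p' \<in> extensional {..<n}" by (simp add: p'_def)
    qed
    then show "H \<in> (\<Union>p\<in>?P. T p)" using gp' ad' sg rg unfolding T_def by blast
  qed
  have finU: "finite (\<Union>p\<in>?P. T p)"
  proof (rule finite_subset[of _ "Pow (Pow {..<n})"])
    show "(\<Union>p\<in>?P. T p) \<subseteq> Pow (Pow {..<n})" unfolding T_def simple_graph_def by auto
  qed simp
  have "card S \<le> card (\<Union>p\<in>?P. T p)" by (rule card_mono[OF finU sub])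
  also have "\<dots> \<le> (\<Sum>p\<in>?P. card (T p))" by (rule card_UN_le[OF finP])
  finally have "real (card S) \<le> (\<Sum>p\<in>?P. real (card (T p)))" by (metis of_nat_le_iff of_nat_sum)
  also have "\<dots> \<le> (\<Sum>p\<in>?P. exp (R + 2 * real d * real n))"
  proof (rule sum_mono)
    fix p assume p: "p \<in> ?P"
    have "real (card (T p)) \<le> real (\<Prod>u<n. Mp n d p u)"
      unfolding T_def using count_profile[of n d p] by (simp only: of_nat_le_iff)
    also have "\<dots> \<le> exp ((\<Sum>u<n. real (fst (p u))) * ln (real d) + (\<Sum>u<n. real (snd (p u))) * ln (real n / real d)
         + 2 * real d * real n)" by (rule prod_Mp_le[OF d n])
    also have "\<dots> \<le> exp (R + 2 * real d * real n)" using p unfolding good_def by simp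
    finally show "real (card (T p)) \<le> exp (R + 2 * real d * real n)" .
  qed
  also have "\<dots> = real (card ?P) * exp (R + 2 * real d * real n)" by simp
  also have "\<dots> \<le> real (card Prof) * exp (R + 2 * real d * real n)"
    using card_mono[OF finProf, of ?P] by (intro mult_right_mono) auto
  also have "\<dots> = real ((d+1)^2) ^ n * exp (R + 2 * real d * real n)" unfolding cardProf by simp
  finally show ?thesis .
qed


lemma ratio_lb:
  fixes t d :: real
  assumes t: "t \<ge> 0" and td: "t + 1 \<le> d"
  shows "t / (t + 2) \<ge> t / (d + 1)"
proof -
  have "t * (t + 2) \<le> t * (d + 1)" using t td by (intro mult_left_mono) auto
  then show ?thesis using t td by (simp add: divide_simps mult.commute)
qed

lemma ratio_lb_bad:
  fixes t d \<delta> :: real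
  assumes t: "t \<ge> 1" and td: "t \<le> d - 1 - \<delta> * d" and \<delta>: "\<delta> > 0" and d: "d \<ge> 1"
  shows "t / (t + 2) \<ge> t / (d + 1) + \<delta> * d / (3 * (d + 1))"
proof -
  have dd: "\<delta> * d \<ge> 0" using \<delta> d by simp
  have "3 * t * (d + 1 - (t + 2)) \<ge> 3 * t * (\<delta> * d)"
    using t td by (intro mult_left_mono) auto
  moreover have "3 * t * (\<delta> * d) \<ge> (t + 2) * (\<delta> * d)"
    using t dd by (intro mult_right_mono) auto
  ultimately have A: "3 * t * (d + 1 - (t + 2)) \<ge> (t + 2) * (\<delta> * d)" by linarith
  have e1: "3 * t * (d + 1 - (t + 2)) = 3 * t * (d + 1) - 3 * t * (t + 2)" by (simp add: algebra_simps)
  have e2: "(3 * t + \<delta> * d) * (t + 2) = 3 * t * (t + 2) + (t + 2) * (\<delta> * d)" by (simp add: algebra_simps)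
  have key: "(3 * t + \<delta> * d) * (t + 2) \<le> t * (3 * (d + 1))" using A e1 e2 by (simp add: algebra_simps)
  have pos1: "t + 2 > 0" "d + 1 > 0" using t d by auto
  have "t / (d + 1) + \<delta> * d / (3 * (d + 1)) = (3 * t + \<delta> * d) / (3 * (d + 1))"
  proof -
    have "(3 * t + \<delta> * d) / (3 * (d + 1)) = 3 * t / (3 * (d + 1)) + \<delta> * d / (3 * (d + 1))"
      by (rule add_divide_distrib)
    moreover have "3 * t / (3 * (d + 1)) = t / (d + 1)" by (rule mult_divide_mult_cancel_left) simp
    ultimately show ?thesis by simp
  qed
  also have "\<dots> \<le> t / (t + 2)"
    using key pos1 by (simp add: divide_le_eq le_divide_eq mult.commute)
  finally show ?thesis .
qed

lemma markov:
  fixes X :: "'a \<Rightarrow> real"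
  assumes fin: "finite P" and X0: "\<And>x. x \<in> P \<Longrightarrow> X x \<le> M"
    and sum: "(\<Sum>x\<in>P. X x) \<ge> real (card P) * a" and a: "a \<ge> 0"
  shows "real (card P) \<le> real (card {x\<in>P. X x \<ge> a - 1}) * (M + 1)"
proof -
  let ?G = "{x\<in>P. X x \<ge> a - 1}" and ?B = "{x\<in>P. \<not> X x \<ge> a - 1}"
  have finG: "finite ?G" and finB: "finite ?B" using fin by auto
  have PU: "P = ?G \<union> ?B" by auto
  have disj: "?G \<inter> ?B = {}" by auto
  have split: "(\<Sum>x\<in>P. X x) = (\<Sum>x\<in>?G. X x) + (\<Sum>x\<in>?B. X x)"
    by (subst PU) (rule sum.union_disjoint[OF finG finB disj])
  have s1: "(\<Sum>x\<in>?G. X x) \<le> real (card ?G) * M"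
    using sum_mono[of ?G X "\<lambda>_. M"] X0 by auto
  have s2: "(\<Sum>x\<in>?B. X x) \<le> real (card ?B) * (a - 1)"
    using sum_mono[of ?B X "\<lambda>_. a - 1"] by auto
  have c: "card ?G + card ?B = card P"
    by (subst (3) PU) (rule card_Un_disjoint[OF finG finB disj, symmetric])
  then have cB: "real (card ?B) = real (card P) - real (card ?G)" by linarith
  have "real (card P) * a \<le> real (card ?G) * M + (real (card P) - real (card ?G)) * (a - 1)"
    using s1 s2[unfolded cB] sum split by linarith
  moreover have "real (card ?G) * a \<ge> 0" using a by simp
  ultimately show ?thesis by (simp add: algebra_simps)
qed


lemma choose2_real: "real (d choose 2) = real d * (real d - 1) / 2"
proof -
  have "even (d * (d - 1))" by (cases "even d") auto
  then have "2 * (d * (d - 1) div 2) = d * (d - 1)" by simp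
  then have "2 * (d choose 2) = d * (d - 1)" by (simp add: choose_two)
  then have "2 * real (d choose 2) = real d * real (d - 1)" by (metis of_nat_mult of_nat_numeral)
  moreover have "real (d - 1) = real d - 1" if "d \<ge> 1" using that by simp
  moreover have "d = 0 \<Longrightarrow> real (d choose 2) = 0" by simp
  ultimately show ?thesis by (cases "d = 0") auto
qed

lemma G_bad_props:
  assumes "G \<in> G_bad n d c \<epsilon> \<delta>"
  shows "simple_graph n G" "regular n d G" "real (num_triangles n G) \<ge> c * T_max d n"
    "real (card {e. bad_edge n d \<delta> G e}) \<ge> \<epsilon> * (real d / 2) * real n"
  using assms by (auto simp: G_bad_def G_dc_def)

lemma sum_ratio_lb:
  assumes G: "G \<in> G_bad n d c \<epsilon> \<delta>" and d: "d \<ge> 1" and c: "c > 0" and \<delta>: "\<delta> > 0"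
  shows "(\<Sum>e\<in>G. real (edge_triangles n G e) / (real (edge_triangles n G e) + 2))
    \<ge> (c * (real d - 1) / (real d + 1) + \<epsilon> * \<delta> * real d / (3 * real d + 3)) * real (card G)"
proof -
  note P = G_bad_props[OF G]
  have sg: "simple_graph n G" and rg: "regular n d G" using P by auto
  have finG: "finite G" using sg by (rule sg_finite)
  let ?t = "\<lambda>e. real (edge_triangles n G e)"
  let ?Bad = "{e. bad_edge n d \<delta> G e}"
  let ?k = "\<delta> * real d / (3 * (real d + 1))"
  have m: "real (card G) = real n * real d / 2"
  proof -
    have "real (2 * card G) = real (n * d)" using handshake[OF sg rg] by (rule arg_cong)
    then show ?thesis by simp
  qed
  have BadG: "?Bad \<subseteq> G" by (auto simp: bad_edge_def)
  have pw: "?t e / (?t e + 2) \<ge> ?t e / (real d + 1) + (if e \<in> ?Bad then ?k else 0)" if e: "e \<in> G" for e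
  proof -
    obtain x y where xy: "e = {x,y}" "x < y" "y < n" using sg_edge_obtain[OF sg e] by blast
    have e': "{x,y} \<in> G" using e xy by simp
    have tb: "edge_triangles n G e + 1 \<le> d"
      using cw_bound[OF sg rg e'] edge_triangles_cw[OF sg e'] xy by simp
    then have tb': "?t e + 1 \<le> real d" by (metis of_nat_1 of_nat_add of_nat_le_iff)
    show ?thesis
    proof (cases "e \<in> ?Bad")
      case True
      then have "1 \<le> edge_triangles n G e" "?t e \<le> real d - 1 - \<delta> * real d"
        by (auto simp: bad_edge_def)
      then have "?t e / (?t e + 2) \<ge> ?t e / (real d + 1) + \<delta> * real d / (3 * (real d + 1))"
        using \<delta> d by (intro ratio_lb_bad) auto
      then show ?thesis using True by simp
    next
      case False
      then show ?thesis using ratio_lb[OF _ tb'] by simp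
    qed
  qed
  have "(\<Sum>e\<in>G. ?t e / (?t e + 2)) \<ge> (\<Sum>e\<in>G. ?t e / (real d + 1) + (if e \<in> ?Bad then ?k else 0))"
    using pw by (intro sum_mono) auto
  also have "(\<Sum>e\<in>G. ?t e / (real d + 1) + (if e \<in> ?Bad then ?k else 0))
      = (\<Sum>e\<in>G. ?t e) / (real d + 1) + real (card ?Bad) * ?k"
  proof -
    have "(\<Sum>e\<in>G. (if e \<in> ?Bad then ?k else 0)) = real (card (G \<inter> ?Bad)) * ?k"
      using finG by (simp add: sum.If_cases)
    moreover have "G \<inter> ?Bad = ?Bad" using BadG by auto
    ultimately show ?thesis by (simp add: sum.distrib sum_divide_distrib)
  qed
  finally have S1: "(\<Sum>e\<in>G. ?t e / (?t e + 2)) \<ge> (\<Sum>e\<in>G. ?t e) / (real d + 1) + real (card ?Bad) * ?k" .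
  have "(\<Sum>e\<in>G. ?t e) = 3 * real (num_triangles n G)"
  proof -
    have "real (\<Sum>e\<in>G. edge_triangles n G e) = real (3 * num_triangles n G)"
      using triangle_count[OF sg] by (rule arg_cong)
    then show ?thesis by (simp add: of_nat_sum)
  qed
  also have "\<dots> \<ge> 3 * (c * T_max d n)" using P(3) by simp
  also have "3 * (c * T_max d n) = c * real d * (real d - 1) * real n / 2"
    unfolding T_max_def choose2_real by (simp add: field_simps)
  finally have S2: "(\<Sum>e\<in>G. ?t e) \<ge> c * real d * (real d - 1) * real n / 2" .
  have dp: "real d + 1 > 0" by simp
  have T1: "(\<Sum>e\<in>G. ?t e) / (real d + 1) \<ge> c * (real d - 1) / (real d + 1) * real (card G)"
  proof -
    have "c * (real d - 1) / (real d + 1) * real (card G) = (c * real d * (real d - 1) * real n / 2) / (real d + 1)"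
      unfolding m by (simp add: field_simps)
    also have "\<dots> \<le> (\<Sum>e\<in>G. ?t e) / (real d + 1)"
      using S2 dp by (intro divide_right_mono) auto
    finally show ?thesis .
  qed
  have T2: "real (card ?Bad) * ?k \<ge> \<epsilon> * \<delta> * real d / (3 * real d + 3) * real (card G)"
  proof -
    have k0: "?k \<ge> 0" using \<delta> by simp
    have "\<epsilon> * \<delta> * real d / (3 * real d + 3) * real (card G) = (\<epsilon> * (real d / 2) * real n) * ?k"
      unfolding m by (simp add: field_simps)
    also have "\<dots> \<le> real (card ?Bad) * ?k" using P(4) k0 by (intro mult_right_mono) auto
    finally show ?thesis .
  qed
  show ?thesis using S1 T1 T2 by (simp add: algebra_simps)
qed


lemma G_bad_finite: "finite (G_bad n d c \<epsilon> \<delta>)"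
proof (rule finite_subset[of _ "Pow (Pow {..<n})"])
  show "G_bad n d c \<epsilon> \<delta> \<subseteq> Pow (Pow {..<n})"
    by (auto simp: G_bad_def G_dc_def simple_graph_def)
qed simp

lemma reduce:
  assumes d: "d \<ge> 1" and c: "c > 0" and \<delta>: "\<delta> > 0" and \<epsilon>: "\<epsilon> > 0"
    and \<alpha>: "\<alpha> = c * (real d - 1) / (real d + 1) + \<epsilon> * \<delta> * real d / (3 * real d + 3)"
    and m: "m = real n * real d / 2"
    and K: "K = {H. simple_graph n H \<and> regular n d H \<and> real (cheap H) \<ge> \<alpha> * m - 1}"
  shows "real (card (G_bad n d c \<epsilon> \<delta>)) \<le> (m + 1) * real (card K)"
proof -
  let ?GB = "G_bad n d c \<epsilon> \<delta>"
  have a0: "\<alpha> \<ge> 0" unfolding \<alpha> using d c \<delta> \<epsilon> by (intro add_nonneg_nonneg) auto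
  have m0: "m \<ge> 0" unfolding m by simp
  have finK: "finite K"
  proof (rule finite_subset[of _ "Pow (Pow {..<n})"])
    show "K \<subseteq> Pow (Pow {..<n})" unfolding K by (auto simp: simple_graph_def)
  qed simp
  have each: "fact n \<le> real (card {\<sigma>\<in>Perms n. relabel \<sigma> G \<in> K}) * (m + 1)" if G: "G \<in> ?GB" for G
  proof -
    note P = G_bad_props[OF G]
    have sg: "simple_graph n G" and rg: "regular n d G" using P by auto
    have cG: "real (card G) = m"
    proof -
      have "real (2 * card G) = real (n * d)" using handshake[OF sg rg] by (rule arg_cong)
      then show ?thesis unfolding m by simp
    qed
    let ?X = "\<lambda>\<sigma>. real (cheap (relabel \<sigma> G))"
    have X0: "?X \<sigma> \<le> m" if "\<sigma> \<in> Perms n" for \<sigma>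
    proof -
      have "\<sigma> permutes {..<n}" using that by simp
      then have "cheap (relabel \<sigma> G) \<le> card G"
        using cheap_le[OF relabel_simple[OF _ sg]] relabel_card by metis
      then show ?thesis using cG by (metis of_nat_le_iff)
    qed
    let ?t = "\<lambda>e. real (edge_triangles n G e)"
    have "(\<Sum>\<sigma>\<in>Perms n. ?X \<sigma>) = (\<Sum>e\<in>G. ?t e * fact n / (?t e + 2))"
      by (rule cheap_average[OF sg])
    also have "\<dots> = fact n * (\<Sum>e\<in>G. ?t e / (?t e + 2))"
      unfolding sum_distrib_left by (intro sum.cong refl) (simp add: mult.commute)
    also have "\<dots> \<ge> fact n * (\<alpha> * real (card G))"
      using sum_ratio_lb[OF G d c \<delta>] unfolding \<alpha>[symmetric] by (intro mult_left_mono) auto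
    finally have sumX: "(\<Sum>\<sigma>\<in>Perms n. ?X \<sigma>) \<ge> real (card (Perms n)) * (\<alpha> * m)"
      unfolding cG Perms_card by simp
    have "real (card (Perms n)) \<le> real (card {\<sigma>\<in>Perms n. ?X \<sigma> \<ge> \<alpha> * m - 1}) * (m + 1)"
      by (rule markov[OF Perms_finite X0 sumX]) (use a0 m0 in auto)
    also have "card {\<sigma>\<in>Perms n. ?X \<sigma> \<ge> \<alpha> * m - 1} \<le> card {\<sigma>\<in>Perms n. relabel \<sigma> G \<in> K}"
    proof (rule card_mono)
      show "finite {\<sigma>\<in>Perms n. relabel \<sigma> G \<in> K}" using Perms_finite by simp
      show "{\<sigma>\<in>Perms n. ?X \<sigma> \<ge> \<alpha> * m - 1} \<subseteq> {\<sigma>\<in>Perms n. relabel \<sigma> G \<in> K}"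
      proof
        fix \<sigma> assume s: "\<sigma> \<in> {\<sigma>\<in>Perms n. ?X \<sigma> \<ge> \<alpha> * m - 1}"
        then have p: "\<sigma> permutes {..<n}" by simp
        have "relabel \<sigma> G \<in> K" unfolding K
          using relabel_simple[OF p sg] relabel_regular[OF p sg rg] s by simp
        then show "\<sigma> \<in> {\<sigma>\<in>Perms n. relabel \<sigma> G \<in> K}" using p by simp
      qed
    qed
    then have "real (card {\<sigma>\<in>Perms n. ?X \<sigma> \<ge> \<alpha> * m - 1}) * (m + 1)
        \<le> real (card {\<sigma>\<in>Perms n. relabel \<sigma> G \<in> K}) * (m + 1)"
      using m0 by (intro mult_right_mono) auto
    finally show ?thesis unfolding Perms_card by simp
  qed
  have "real (card ?GB) * fact n = (\<Sum>G\<in>?GB. fact n)" by simp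
  also have "\<dots> \<le> (\<Sum>G\<in>?GB. real (card {\<sigma>\<in>Perms n. relabel \<sigma> G \<in> K}) * (m + 1))"
    using each by (intro sum_mono) auto
  also have "\<dots> = (m + 1) * real (\<Sum>G\<in>?GB. card {\<sigma>\<in>Perms n. relabel \<sigma> G \<in> K})"
    by (simp add: sum_distrib_left mult.commute)
  also have "(\<Sum>G\<in>?GB. card {\<sigma>\<in>Perms n. relabel \<sigma> G \<in> K}) = (\<Sum>\<sigma>\<in>Perms n. card {G\<in>?GB. relabel \<sigma> G \<in> K})"
    by (rule double_count[OF G_bad_finite Perms_finite])
  also have "\<dots> \<le> (\<Sum>\<sigma>\<in>Perms n. card K)"
  proof (rule sum_mono)
    fix \<sigma> assume "\<sigma> \<in> Perms n"
    then have p: "\<sigma> permutes {..<n}" by simp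
    have "inj_on (relabel \<sigma>) {G\<in>?GB. relabel \<sigma> G \<in> K}"
      using relabel_inj[OF p] by (rule inj_on_subset) simp
    then show "card {G\<in>?GB. relabel \<sigma> G \<in> K} \<le> card K"
      by (rule card_inj_on_le) (use finK in auto)
  qed
  also have "\<dots> = fact n * card K" by (simp add: Perms_card)
  finally have "real (card ?GB) * fact n \<le> (m + 1) * (fact n * real (card K))"
    using m0 by (simp add: mult_left_mono)
  then have "real (card ?GB) * fact n \<le> ((m + 1) * real (card K)) * fact n" by (simp add: algebra_simps)
  then show ?thesis by (simp add: mult_le_cancel_right)
qed


lemma Uf_mem:
  assumes sg: "simple_graph n H"
  shows "v \<in> Uf (Fw H) u \<longleftrightarrow> (\<exists>w. w < u \<and> {w,u} \<in> H \<and> {w,v} \<in> H)"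
proof -
  have "v \<in> Uf (Fw H) u \<longleftrightarrow> (\<exists>w. w < u \<and> u \<in> Fw H w \<and> v \<in> Nf (Fw H) w)"
    unfolding Uf_def by blast
  also have "\<dots> \<longleftrightarrow> (\<exists>w. w < u \<and> {w,u} \<in> H \<and> {w,v} \<in> H)"
    unfolding Nf_Fw[OF sg] by (auto simp: Fw_def nbr_def)
  finally show ?thesis .
qed

lemma cheap_sum:
  assumes sg: "simple_graph n H"
  shows "cheap H = (\<Sum>u<n. card (Fw H u \<inter> Uf (Fw H) u))"
proof -
  have "cheap H = (\<Sum>u<n. card {v. u < v \<and> {u,v} \<in> H \<and> (\<exists>w. \<forall>x\<in>{u,v}. w < x \<and> {w,x} \<in> H)})"
    unfolding cheap_def by (rule pair_sum[OF sg])
  also have "\<dots> = (\<Sum>u<n. card (Fw H u \<inter> Uf (Fw H) u))"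
  proof (rule sum.cong[OF refl])
    fix u
    have "{v. u < v \<and> {u,v} \<in> H \<and> (\<exists>w. \<forall>x\<in>{u,v}. w < x \<and> {w,x} \<in> H)} = Fw H u \<inter> Uf (Fw H) u"
    proof (rule set_eqI)
      fix v
      show "v \<in> {v. u < v \<and> {u,v} \<in> H \<and> (\<exists>w. \<forall>x\<in>{u,v}. w < x \<and> {w,x} \<in> H)} \<longleftrightarrow> v \<in> Fw H u \<inter> Uf (Fw H) u"
        using Uf_mem[OF sg, of v u] by (auto simp: Fw_def)
    qed
    then show "card {v. u < v \<and> {u,v} \<in> H \<and> (\<exists>w. \<forall>x\<in>{u,v}. w < x \<and> {w,x} \<in> H)} = card (Fw H u \<inter> Uf (Fw H) u)"
      by simp
  qed
  finally show ?thesis .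
qed

lemma card_sum:
  assumes sg: "simple_graph n H"
  shows "card H = (\<Sum>u<n. card (Fw H u))"
  using pair_sum[OF sg, of "\<lambda>_. True"] by (simp add: Fw_def)

lemma Fw_finite: "simple_graph n H \<Longrightarrow> finite (Fw H u) \<and> Fw H u \<subseteq> {..<n}"
proof -
  assume sg: "simple_graph n H"
  have "Fw H u \<subseteq> {..<n}" using sg_edge2[OF sg] by (auto simp: Fw_def)
  then show ?thesis using finite_subset by blast
qed

lemma profile1:
  assumes sg: "simple_graph n H"
  shows "admits n H (\<lambda>u. (card (Fw H u \<inter> Uf (Fw H) u), card (Fw H u - Uf (Fw H) u)))"
    "(\<Sum>u<n. real (card (Fw H u \<inter> Uf (Fw H) u))) = real (cheap H)"
    "(\<Sum>u<n. real (card (Fw H u - Uf (Fw H) u))) = real (card H) - real (cheap H)"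
proof -
  show "admits n H (\<lambda>u. (card (Fw H u \<inter> Uf (Fw H) u), card (Fw H u - Uf (Fw H) u)))"
    unfolding admits_def
  proof (intro allI impI)
    fix u assume "u < n"
    show "\<exists>A B. Fw H u = A \<union> B \<and> A \<inter> B = {} \<and> A \<subseteq> Uf (Fw H) u \<and>
      card A = fst (card (Fw H u \<inter> Uf (Fw H) u), card (Fw H u - Uf (Fw H) u)) \<and>
      B \<subseteq> {..<n} \<and> card B = snd (card (Fw H u \<inter> Uf (Fw H) u), card (Fw H u - Uf (Fw H) u))"
      by (rule exI[of _ "Fw H u \<inter> Uf (Fw H) u"], rule exI[of _ "Fw H u - Uf (Fw H) u"])
        (use Fw_finite[OF sg, of u] in auto)
  qed
  show S1: "(\<Sum>u<n. real (card (Fw H u \<inter> Uf (Fw H) u))) = real (cheap H)"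
    unfolding cheap_sum[OF sg] by (simp add: of_nat_sum)
  have "(\<Sum>u<n. real (card (Fw H u - Uf (Fw H) u))) = (\<Sum>u<n. real (card (Fw H u)) - real (card (Fw H u \<inter> Uf (Fw H) u)))"
  proof (rule sum.cong[OF refl])
    fix u
    have f: "finite (Fw H u)" using Fw_finite[OF sg] by blast
    have "card (Fw H u - Uf (Fw H) u) + card (Fw H u \<inter> Uf (Fw H) u) = card (Fw H u)"
      using f by (metis card_Diff_subset_Int card_mono finite_Int inf_le1 le_add_diff_inverse2 Diff_Diff_Int
            card_Diff_subset inf_commute)
    then show "real (card (Fw H u - Uf (Fw H) u)) = real (card (Fw H u)) - real (card (Fw H u \<inter> Uf (Fw H) u))"
      by linarith
  qed
  also have "\<dots> = real (card H) - real (cheap H)"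
    unfolding sum_subtractf S1 card_sum[OF sg] by (simp add: of_nat_sum)
  finally show "(\<Sum>u<n. real (card (Fw H u - Uf (Fw H) u))) = real (card H) - real (cheap H)" .
qed

lemma profile2:
  assumes sg: "simple_graph n H"
  shows "admits n H (\<lambda>u. (0, card (Fw H u)))"
    "(\<Sum>u<n. real (fst ((\<lambda>u. (0::nat, card (Fw H u))) u))) = 0"
    "(\<Sum>u<n. real (snd ((\<lambda>u. (0::nat, card (Fw H u))) u))) = real (card H)"
proof -
  show "admits n H (\<lambda>u. (0, card (Fw H u)))"
    unfolding admits_def
  proof (intro allI impI)
    fix u assume "u < n"
    show "\<exists>A B. Fw H u = A \<union> B \<and> A \<inter> B = {} \<and> A \<subseteq> Uf (Fw H) u \<and>
      card A = fst (0::nat, card (Fw H u)) \<and> B \<subseteq> {..<n} \<and> card B = snd (0::nat, card (Fw H u))"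
      by (rule exI[of _ "{}"], rule exI[of _ "Fw H u"]) (use Fw_finite[OF sg, of u] in auto)
  qed
  show "(\<Sum>u<n. real (fst ((\<lambda>u. (0::nat, card (Fw H u))) u))) = 0" by simp
  show "(\<Sum>u<n. real (snd ((\<lambda>u. (0::nat, card (Fw H u))) u))) = real (card H)"
    unfolding card_sum[OF sg] by (simp add: of_nat_sum)
qed


lemma ln_count_bound:
  fixes x Q R :: real
  assumes x: "x > 0" and le: "x \<le> Q * real ((d+1)^2) ^ n * exp (R + 2 * real d * real n)" and Q: "Q > 0"
  shows "ln x \<le> ln Q + 2 * real n * ln (real d + 1) + R + 2 * real d * real n"
proof -
  have p1: "real ((d+1)^2) ^ n > 0" by simp
  have "ln x \<le> ln (Q * real ((d+1)^2) ^ n * exp (R + 2 * real d * real n))"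
    by (rule ln_mono[OF le x])
  also have "\<dots> = ln Q + ln (real ((d+1)^2) ^ n) + (R + 2 * real d * real n)"
    using Q p1 by (simp add: ln_mult)
  also have "ln (real ((d+1)^2) ^ n) = 2 * real n * ln (real d + 1)"
    by (simp add: ln_realpow add.commute)
  finally show ?thesis by simp
qed

lemma bound_n:
  fixes c \<epsilon> \<delta> :: real and d n :: nat
  assumes d1: "d \<ge> 1" and dn: "d \<le> n" and c: "0 < c" and \<epsilon>: "\<epsilon> > 0" and \<delta>: "\<delta> > 0"
    and pos: "card (G_bad n d c \<epsilon> \<delta>) > 0"
  shows "ln (real (card (G_bad n d c \<epsilon> \<delta>))) \<le>
      (1 - c * (real d - 1) / (real d + 1) - \<epsilon> * \<delta> * real d / (3 * real d + 3))
        * (real d * real n / 2) * ln (real n / real d)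
      + (c + \<epsilon> * \<delta> * real d / (3 * real d + 3)) * (real d * real n / 2) * ln (real d)
      + 6 * real d * real n"
proof -
  define \<beta> where "\<beta> = \<epsilon> * \<delta> * real d / (3 * real d + 3)"
  define \<alpha> where "\<alpha> = c * (real d - 1) / (real d + 1) + \<epsilon> * \<delta> * real d / (3 * real d + 3)"
  define m where "m = real n * real d / 2"
  define L1 where "L1 = ln (real n / real d)"
  define L2 where "L2 = ln (real d)"
  let ?GB = "G_bad n d c \<epsilon> \<delta>"
  have n1: "n \<ge> 1" using d1 dn by simp
  have dpos: "real d > 0" using d1 by simp
  have b0: "\<beta> \<ge> 0" unfolding \<beta>_def using \<epsilon> \<delta> by simp
  have a0: "\<alpha> \<ge> 0" unfolding \<alpha>_def using d1 c \<delta> \<epsilon> by (intro add_nonneg_nonneg) auto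
  have c1: "c * (real d - 1) / (real d + 1) \<le> c"
  proof -
    have "c * (real d - 1) \<le> c * (real d + 1)" using c by (intro mult_left_mono) auto
    then show ?thesis using dpos by (simp add: divide_le_eq)
  qed
  have aleq: "\<alpha> \<le> c + \<beta>" unfolding \<alpha>_def \<beta>_def using c1 by simp
  have m0: "m \<ge> 0" unfolding m_def by simp
  have md: "m \<le> real d * real n"
  proof -
    have "real n * real d \<ge> 0" by simp
    then show ?thesis unfolding m_def by simp
  qed
  have L10: "L1 \<ge> 0" unfolding L1_def using dn dpos by (simp add: le_divide_eq)
  have L20: "L2 \<ge> 0" unfolding L2_def using d1 by simp
  have L1n: "L1 \<le> real d * real n"
  proof -
    have "L1 \<le> real n / real d - 1" unfolding L1_def using dpos n1 by (intro ln_le_minus_one) simp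
    also have "\<dots> \<le> real n"
    proof -
      have "real n * 1 \<le> real n * real d" using d1 by (intro mult_left_mono) auto
      then have "real n / real d \<le> real n" using dpos by (simp add: divide_le_eq)
      then show ?thesis by simp
    qed
    also have "\<dots> \<le> real d * real n"
    proof -
      have "1 * real n \<le> real d * real n" using d1 by (intro mult_right_mono) auto
      then show ?thesis by simp
    qed
    finally show ?thesis .
  qed
  have lnd: "ln (real d + 1) \<le> real d" using ln_add_one_self_le_self[of "real d"] by (simp add: add.commute)
  have lnd': "2 * real n * ln (real d + 1) \<le> 2 * real d * real n"
  proof -
    have "real n * ln (real d + 1) \<le> real n * real d" using lnd by (intro mult_left_mono) auto
    then show ?thesis by (simp add: mult.commute)
  qed
  have lnm: "ln (m + 1) \<le> m" using ln_add_one_self_le_self[OF m0] by (simp add: add.commute)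
  have GBpos: "real (card ?GB) > 0" using pos by simp
  have T1: "(1 - c * (real d - 1) / (real d + 1) - \<epsilon> * \<delta> * real d / (3 * real d + 3))
        * (real d * real n / 2) * ln (real n / real d) = (1 - \<alpha>) * m * L1"
    unfolding \<alpha>_def m_def L1_def by (simp add: algebra_simps)
  have T2: "(c + \<epsilon> * \<delta> * real d / (3 * real d + 3)) * (real d * real n / 2) * ln (real d) = (c + \<beta>) * m * L2"
    unfolding \<beta>_def m_def L2_def by (simp add: algebra_simps)
  have X23: "\<alpha> * m * L2 \<le> (c + \<beta>) * m * L2"
    using aleq m0 L20 by (intro mult_right_mono) auto
  have cardm: "real (card H) = m" if "simple_graph n H" "regular n d H" for H
  proof -
    have "real (2 * card H) = real (n * d)" using handshake[OF that] by (rule arg_cong)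
    then show ?thesis unfolding m_def by simp
  qed
  show ?thesis
  proof (cases "real d * real d \<le> real n")
    case True
    have nd: "real n / real d > 0" using n1 dpos by simp
    have L21: "L2 \<le> L1" unfolding L1_def L2_def using True dpos nd
      by (subst ln_le_cancel_iff) (auto simp: le_divide_eq)
    define K where "K = {H. simple_graph n H \<and> regular n d H \<and> real (cheap H) \<ge> \<alpha> * m - 1}"
    have red: "real (card ?GB) \<le> (m + 1) * real (card K)"
      by (rule reduce[OF d1 c \<delta> \<epsilon> \<alpha>_def m_def K_def])
    define R where "R = (1 - \<alpha>) * m * L1 + \<alpha> * m * L2 + L1"
    have Kc: "real (card K) \<le> real ((d+1)^2) ^ n * exp (R + 2 * real d * real n)"
    proof (rule count_main[OF d1 n1])
      show "\<forall>H\<in>K. simple_graph n H \<and> regular n d H \<and> (\<exists>p. admits n H p \<and>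
        (\<Sum>u<n. real (fst (p u))) * ln (real d) + (\<Sum>u<n. real (snd (p u))) * ln (real n / real d) \<le> R)"
      proof
        fix H assume H: "H \<in> K"
        then have sg: "simple_graph n H" and rg: "regular n d H" and ch: "real (cheap H) \<ge> \<alpha> * m - 1"
          unfolding K_def by auto
        let ?p = "\<lambda>u. (card (Fw H u \<inter> Uf (Fw H) u), card (Fw H u - Uf (Fw H) u))"
        note pr = profile1[OF sg]
        have s1: "(\<Sum>u<n. real (fst (?p u))) = real (cheap H)" using pr(2) by simp
        have s2: "(\<Sum>u<n. real (snd (?p u))) = m - real (cheap H)" using pr(3) cardm[OF sg rg] by simp
        have "real (cheap H) * (L1 - L2) \<ge> (\<alpha> * m - 1) * (L1 - L2)"
          using ch L21 by (intro mult_right_mono) auto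
        then have "real (cheap H) * L2 + (m - real (cheap H)) * L1 \<le> R"
          unfolding R_def using L20 by (simp add: algebra_simps)
        then have "(\<Sum>u<n. real (fst (?p u))) * ln (real d) + (\<Sum>u<n. real (snd (?p u))) * ln (real n / real d) \<le> R"
          unfolding s1 s2 L1_def[symmetric] L2_def[symmetric] by simp
        then show "simple_graph n H \<and> regular n d H \<and> (\<exists>p. admits n H p \<and>
          (\<Sum>u<n. real (fst (p u))) * ln (real d) + (\<Sum>u<n. real (snd (p u))) * ln (real n / real d) \<le> R)"
          using sg rg pr(1) by blast
      qed
    qed
    have "real (card ?GB) \<le> (m + 1) * real ((d+1)^2) ^ n * exp (R + 2 * real d * real n)"
    proof -
      have "(m + 1) * real (card K) \<le> (m + 1) * (real ((d+1)^2) ^ n * exp (R + 2 * real d * real n))"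
        by (rule mult_left_mono[OF Kc]) (use m0 in simp)
      then show ?thesis using red by (simp only: mult.assoc)
    qed
    then have "ln (real (card ?GB)) \<le> ln (m + 1) + 2 * real n * ln (real d + 1) + R + 2 * real d * real n"
      using GBpos m0 by (intro ln_count_bound) auto
    also have "\<dots> \<le> (1 - \<alpha>) * m * L1 + \<alpha> * m * L2 + 6 * real d * real n"
      unfolding R_def using lnm md lnd' L1n by linarith
    finally show ?thesis unfolding T1 T2 using X23 by linarith
  next
    case False
    have nd: "real n / real d > 0" using n1 dpos by simp
    have L12: "L1 \<le> L2" unfolding L1_def L2_def using False dpos nd
      by (subst ln_le_cancel_iff) (auto simp: divide_le_eq)
    define R where "R = m * L1"
    have Gc: "real (card ?GB) \<le> real ((d+1)^2) ^ n * exp (R + 2 * real d * real n)"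
    proof (rule count_main[OF d1 n1])
      show "\<forall>H\<in>?GB. simple_graph n H \<and> regular n d H \<and> (\<exists>p. admits n H p \<and>
        (\<Sum>u<n. real (fst (p u))) * ln (real d) + (\<Sum>u<n. real (snd (p u))) * ln (real n / real d) \<le> R)"
      proof
        fix H assume H: "H \<in> ?GB"
        then have sg: "simple_graph n H" and rg: "regular n d H" using G_bad_props by auto
        note pr = profile2[OF sg]
        have "(\<Sum>u<n. real (fst ((\<lambda>u. (0::nat, card (Fw H u))) u))) * ln (real d)
          + (\<Sum>u<n. real (snd ((\<lambda>u. (0::nat, card (Fw H u))) u))) * ln (real n / real d) \<le> R"
          unfolding pr(2) pr(3) cardm[OF sg rg] R_def L1_def by simp
        then show "simple_graph n H \<and> regular n d H \<and> (\<exists>p. admits n H p \<and>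
          (\<Sum>u<n. real (fst (p u))) * ln (real d) + (\<Sum>u<n. real (snd (p u))) * ln (real n / real d) \<le> R)"
          using sg rg pr(1) by blast
      qed
    qed
    have "ln (real (card ?GB)) \<le> ln 1 + 2 * real n * ln (real d + 1) + R + 2 * real d * real n"
      using GBpos Gc by (intro ln_count_bound) auto
    then have A: "ln (real (card ?GB)) \<le> m * L1 + 4 * real d * real n"
      unfolding R_def using lnd' by simp
    have e: "m * L1 = (1 - \<alpha>) * m * L1 + \<alpha> * m * L1" by (simp add: algebra_simps)
    have "\<alpha> * m * L1 \<le> \<alpha> * m * L2" using a0 m0 L12 by (intro mult_left_mono) auto
    moreover have "real d * real n \<ge> 0" by simp
    ultimately show ?thesis unfolding T1 T2 using A e X23 by linarith
  qed
qed


theorem lemma4: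
  fixes c \<epsilon> \<delta> :: real and d :: "nat \<Rightarrow> nat"
  assumes "0 < c" "c < 1" "\<epsilon> > 0" "\<delta> > 0"
    and "(\<lambda>n. real (d n) / real n) \<longlonglongrightarrow> 0"
    and "\<forall>\<^sub>F n in sequentially. d n \<ge> 1"
  shows "\<exists>C. \<forall>\<^sub>F n in sequentially.
    card (G_bad n (d n) c \<epsilon> \<delta>) > 0 \<longrightarrow>
    ln (real (card (G_bad n (d n) c \<epsilon> \<delta>))) \<le>
      (1 - c * (real (d n) - 1) / (real (d n) + 1) - \<epsilon> * \<delta> * real (d n) / (3 * real (d n) + 3))
        * (real (d n) * real n / 2) * ln (real n / real (d n))
      + (c + \<epsilon> * \<delta> * real (d n) / (3 * real (d n) + 3)) * (real (d n) * real n / 2) * ln (real (d n))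
      + C * real (d n) * real n"
proof (intro exI[of _ 6])
  have ev1: "\<forall>\<^sub>F n in sequentially. real (d n) / real n < 1"
    using order_tendstoD(2)[OF assms(5), of 1] by simp
  have ev2: "\<forall>\<^sub>F n in sequentially. n \<ge> (1::nat)" by (rule eventually_ge_at_top)
  have "\<forall>\<^sub>F n in sequentially. d n \<ge> 1 \<and> d n \<le> n"
    using eventually_conj[OF assms(6) eventually_conj[OF ev1 ev2]]
  proof (rule eventually_mono)
    fix n assume h: "1 \<le> d n \<and> real (d n) / real n < 1 \<and> 1 \<le> n"
    then have "real n > 0" by simp
    then have "real (d n) < real n" using h divide_less_eq_1_pos[of "real n" "real (d n)"] by blast
    then show "d n \<ge> 1 \<and> d n \<le> n" using h by simp
  qed
  then show "\<forall>\<^sub>F n in sequentially.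
    card (G_bad n (d n) c \<epsilon> \<delta>) > 0 \<longrightarrow>
    ln (real (card (G_bad n (d n) c \<epsilon> \<delta>))) \<le>
      (1 - c * (real (d n) - 1) / (real (d n) + 1) - \<epsilon> * \<delta> * real (d n) / (3 * real (d n) + 3))
        * (real (d n) * real n / 2) * ln (real n / real (d n))
      + (c + \<epsilon> * \<delta> * real (d n) / (3 * real (d n) + 3)) * (real (d n) * real n / 2) * ln (real (d n))
      + 6 * real (d n) * real n"
  proof (rule eventually_mono)
    fix n assume h: "d n \<ge> 1 \<and> d n \<le> n"
    show "card (G_bad n (d n) c \<epsilon> \<delta>) > 0 \<longrightarrow>
    ln (real (card (G_bad n (d n) c \<epsilon> \<delta>))) \<le>
      (1 - c * (real (d n) - 1) / (real (d n) + 1) - \<epsilon> * \<delta> * real (d n) / (3 * real (d n) + 3))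
        * (real (d n) * real n / 2) * ln (real n / real (d n))
      + (c + \<epsilon> * \<delta> * real (d n) / (3 * real (d n) + 3)) * (real (d n) * real n / 2) * ln (real (d n))
      + 6 * real (d n) * real n"
      using bound_n[of "d n" n c \<epsilon> \<delta>] h assms(1,3,4) by blast
  qed
qed


end
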